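(* Let $u_h^*\in\mathcal S_{h,p+1}$ be a discrete ground state with multiplier $\lambda^*$. (i) Under (A1), there exists $\delta>0$ such that for any $u_h\in U_{h,\delta}(u_h^* )$ written as $u_h=(1+r)u_h^*+\xi_h$ with $r\in\mathbb R$, $\xi_h\in\mathcal T_{u_h^*,h}$, the relation $\|u_h\|_{h,p+1}=1$ determines $r$ uniquely as a $C^2$ map $\xi_h\mapsto r(\xi_h)$ from a neighborhood of $0$ in $\mathcal T_{u_h^*,h}$ to a neighborhood of $0$ in $\mathbb R$, with $r(0)=0$ and $|r(\xi_h)|\lesssim\|\xi_h\|_{h,p+1}^2\lesssim\|\xi_h\|_{1,h}^2$. (ii) If in addition (A2') holds and there is $c>0$ with $$\mathcal D^2_uL_h(u_h^*,\lambda^* )[\xi_h,\xi_h]=2\big(\langle\mathcal A_h\xi_h,\xi_h\rangle_h-p\lambda^*\langle|u_h^*|^{p-1}\xi_h,\xi_h\rangle_h\big)\ge c\|\xi_h\|_{1,h}^2\quad\forall\xi_h\in\mathcal T_{u_h^*,h},$$ then for sufficiently small $\delta>0$, $Q_h(u_h)-Q_h(u_h^* )\asymp\|u_h-u_h^*\|_{1,h}^2$ for all $u_h\in U_{h,\delta}(u_h^* )\cap\mathcal S_{h,p+1}$, and $u_h^*$ is the unique minimizer of $Q_h$ over $U_{h,\delta}(u_h^* )\cap\mathcal S_{h,p+1}$.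
   Context: Fully discrete setting ($d=1$), real-valued grid functions. $\Omega=[x_0,x_0+L]$, $M>0$ even, $h=L/M$, grid $x_j=x_0+jh$, $j\in\Gamma_h=\{0,\dots,M-1\}$, periodic; $X_h=\mathbb R^M$. $\varphi_j(x)=\frac1M\sum_{l=-M/2}^{M/2}\frac1{a_l}e^{\mathrm il\sigma(x-x_j)}$, $a_l=1$ ($|l|<M/2$), $a_l=2$ ($|l|=M/2$), $\sigma=2\pi/L$; $(\mathbf D_{xx})_{j,l}=\varphi_l''(x_j)$. $\langle u_h,v_h\rangle_h=h\sum_ju_jv_j$, $\|u_h\|_h^2=\langle u_h,u_h\rangle_h$, $|u_h|_{1,h}^2=\langle-\mathbf D_{xx}u_h,u_h\rangle_h$, $\|u_h\|_{1,h}^2=\|u_h\|_h^2+|u_h|_{1,h}^2$, $\|u_h\|_{h,q}=(h\sum_j|u_j|^q)^{1/q}$. $V_j=V(x_j)$; $Q_h(u_h)=\frac12|u_h|_{1,h}^2+h\sum_jV_j|u_j|^2+\omega\|u_h\|_h^2$; $(\mathcal A_hu_h)_j=-\frac12(\mathbf D_{xx}u_h)_j+(V_j+\omega)u_j$, so $Q_h(u_h)=\langle\mathcal A_hu_h,u_h\rangle_h$. $\mathcal S_{h,p+1}=\{u_h:\|u_h\|_{h,p+1}=1\}$. (A1): $1<p<\infty$, $V\ge0$ bounded. $\lambda_0':=\inf\{\frac12|u_h|_{1,h}^2+h\sum_jV_j|u_j|^2:\|u_h\|_h=1\}$; (A2'): $\omega>-\lambda_0'$. A discrete ground state is $u_h^*\in\arg\min\{Q_h(u_h):u_h\in\mathcal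 S_{h,p+1}\}$; it satisfies $(\mathcal A_hu_h^* )_j=\lambda^*|u_j^*|^{p-1}u_j^*$. $G_h(u_h)=\frac2{p+1}(\|u_h\|_{h,p+1}^{p+1}-1)$, $L_h(u_h,\lambda)=Q_h(u_h)-\lambda G_h(u_h)$. $\mathcal T_{u_h^*,h}=\{\xi_h\in X_h:\langle|u_h^*|^{p-1}u_h^*,\xi_h\rangle_h=0\}$. $U_{h,\delta}(u_h^* )=\{u_h:\|u_h-u_h^*\|_{1,h}\le\delta\}$. $a\lesssim b$ means $|a|\le Cb$ with $C$ independent of the function argument; $a\asymp b$ means both directions. *)

theory Defs
  imports "HOL-Analysis.Analysis" "HOL-Library.Numeral_Type"
begin

text \<open>Grid functions on M = CARD('m bit0) = 2*CARD('m) points (M even, M > 0).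
  The grid index of j is Rep_bit0 j in {0..<M}.  X_h = real^('m bit0).\<close>

type_synonym 'm grid = "real ^ ('m bit0)"

definition Mh :: "'m::finite itself \<Rightarrow> nat" where
  "Mh _ = CARD('m bit0)"

definition hh :: "real \<Rightarrow> 'm::finite itself \<Rightarrow> real" where
  "hh L T = L / real (Mh T)"

definition gridpt :: "real \<Rightarrow> real \<Rightarrow> 'm::finite bit0 \<Rightarrow> real" where
  "gridpt x0 L j = x0 + real_of_int (Rep_bit0 j) * hh L TYPE('m)"

definition acoef :: "nat \<Rightarrow> int \<Rightarrow> real" where
  "acoef M l = (if \<bar>l\<bar> = int M div 2 then 2 else 1)"

definition phi :: "real \<Rightarrow> real \<Rightarrow> 'm::finite bit0 \<Rightarrow> real \<Rightarrow> complex" where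
  "phi x0 L j x = (1 / of_nat (Mh TYPE('m))) *
     (\<Sum>l\<in>{- (int (Mh TYPE('m)) div 2) .. int (Mh TYPE('m)) div 2}.
        of_real (1 / acoef (Mh TYPE('m)) l) *
        exp (\<i> * of_int l * of_real (2 * pi / L) * of_real (x - gridpt x0 L j)))"

definition Dxx :: "real \<Rightarrow> real \<Rightarrow> 'm::finite bit0 \<Rightarrow> 'm bit0 \<Rightarrow> real" where
  "Dxx x0 L j l = Re (vector_derivative
      (\<lambda>x. vector_derivative (phi x0 L l) (at x)) (at (gridpt x0 L j)))"

definition Dxx_app :: "real \<Rightarrow> real \<Rightarrow> 'm::finite grid \<Rightarrow> 'm grid" where
  "Dxx_app x0 L u = (\<chi> j. \<Sum>l\<in>UNIV. Dxx x0 L j l * u $ l)"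

definition inner_h :: "real \<Rightarrow> 'm::finite grid \<Rightarrow> 'm grid \<Rightarrow> real" where
  "inner_h L u v = hh L TYPE('m) * (\<Sum>j\<in>UNIV. u $ j * v $ j)"

definition normsq_h :: "real \<Rightarrow> 'm::finite grid \<Rightarrow> real" where
  "normsq_h L u = inner_h L u u"

definition semi1sq_h :: "real \<Rightarrow> real \<Rightarrow> 'm::finite grid \<Rightarrow> real" where
  "semi1sq_h x0 L u = inner_h L (- Dxx_app x0 L u) u"

definition norm1_h :: "real \<Rightarrow> real \<Rightarrow> 'm::finite grid \<Rightarrow> real" where
  "norm1_h x0 L u = sqrt (normsq_h L u + semi1sq_h x0 L u)"

definition normq_h :: "real \<Rightarrow> real \<Rightarrow> 'm::finite grid \<Rightarrow> real" where
  "normq_h L q u = (hh L TYPE('m) * (\<Sum>j\<in>UNIV. \<bar>u $ j\<bar> powr q)) powr (1 / q)"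

definition Q_h :: "real \<Rightarrow> real \<Rightarrow> (real \<Rightarrow> real) \<Rightarrow> real \<Rightarrow> 'm::finite grid \<Rightarrow> real" where
  "Q_h x0 L V \<omega> u = semi1sq_h x0 L u / 2
     + hh L TYPE('m) * (\<Sum>j\<in>UNIV. V (gridpt x0 L j) * \<bar>u $ j\<bar>^2) + \<omega> * normsq_h L u"

definition A_h :: "real \<Rightarrow> real \<Rightarrow> (real \<Rightarrow> real) \<Rightarrow> real \<Rightarrow> 'm::finite grid \<Rightarrow> 'm grid" where
  "A_h x0 L V \<omega> u = (\<chi> j. - (Dxx_app x0 L u $ j) / 2 + (V (gridpt x0 L j) + \<omega>) * u $ j)"

definition S_h :: "real \<Rightarrow> real \<Rightarrow> 'm::finite grid set" where
  "S_h L p = {u. normq_h L (p + 1) u = 1}"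

definition powu :: "real \<Rightarrow> 'm::finite grid \<Rightarrow> 'm grid" where
  "powu p u = (\<chi> j. \<bar>u $ j\<bar> powr (p - 1) * u $ j)"

definition lambda0' :: "real \<Rightarrow> real \<Rightarrow> (real \<Rightarrow> real) \<Rightarrow> 'm::finite itself \<Rightarrow> real" where
  "lambda0' x0 L V T = Inf {semi1sq_h x0 L u / 2
        + hh L TYPE('m) * (\<Sum>j\<in>UNIV. V (gridpt x0 L j) * \<bar>u $ j\<bar>^2) | u :: 'm grid.
        normsq_h L u = 1}"

definition is_ground_state ::
  "real \<Rightarrow> real \<Rightarrow> (real \<Rightarrow> real) \<Rightarrow> real \<Rightarrow> real \<Rightarrow> 'm::finite grid \<Rightarrow> bool" where
  "is_ground_state x0 L V \<omega> p u \<longleftrightarrow>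
     u \<in> S_h L p \<and> (\<forall>v :: 'm grid \<in> S_h L p. Q_h x0 L V \<omega> u \<le> Q_h x0 L V \<omega> v)"

definition tangent_h :: "real \<Rightarrow> real \<Rightarrow> 'm::finite grid \<Rightarrow> 'm grid set" where
  "tangent_h L p us = {\<xi>. inner_h L (powu p us) \<xi> = 0}"

definition U_h :: "real \<Rightarrow> real \<Rightarrow> real \<Rightarrow> 'm::finite grid \<Rightarrow> 'm grid set" where
  "U_h x0 L \<delta> us = {u. norm1_h x0 L (u - us) \<le> \<delta>}"

definition C2_on :: "'a::real_normed_vector set \<Rightarrow> ('a \<Rightarrow> real) \<Rightarrow> bool" where
  "C2_on W f \<longleftrightarrow> (\<exists>f' :: 'a \<Rightarrow> ('a \<Rightarrow>\<^sub>L real). \<exists>f'' :: 'a \<Rightarrow> ('a \<Rightarrow>\<^sub>L ('a \<Rightarrow>\<^sub>L real)).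
      (\<forall>x\<in>W. (f has_derivative blinfun_apply (f' x)) (at x)) \<and>
      (\<forall>x\<in>W. (f' has_derivative blinfun_apply (f'' x)) (at x)) \<and>
      continuous_on W f'')"

end

theory Submission
  imports Defs
begin

definition gg :: "real \<Rightarrow> real \<Rightarrow> real" where "gg p t = \<bar>t\<bar> powr (p+1)"
definition g1 :: "real \<Rightarrow> real \<Rightarrow> real" where "g1 p t = (p+1) * (\<bar>t\<bar> powr (p-1) * t)"
definition g2 :: "real \<Rightarrow> real \<Rightarrow> real" where "g2 p t = (p+1) * p * \<bar>t\<bar> powr (p-1)"

lemma deriv0_aux:
  fixes f :: "real \<Rightarrow> real"
  assumes "\<And>y. \<bar>f y\<bar> \<le> C * \<bar>y\<bar> powr q" "q > 1" "f 0 = 0"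
  shows "(f has_real_derivative 0) (at 0)"
proof -
  have "((\<lambda>y. (f y - f 0) / (y - 0)) \<longlongrightarrow> 0) (at 0)"
  proof (rule Lim_null_comparison)
    show "\<forall>\<^sub>F y in at 0. norm ((f y - f 0) / (y - 0)) \<le> C * \<bar>y\<bar> powr (q - 1)"
    proof (rule eventually_at_filter[THEN iffD2], rule always_eventually, intro allI impI)
      fix y :: real assume "y \<noteq> 0"
      have "\<bar>y\<bar> powr q = \<bar>y\<bar> powr (q-1) * \<bar>y\<bar>"
        using \<open>y \<noteq> 0\<close> by (simp add: powr_diff)
      then show "norm ((f y - f 0) / (y - 0)) \<le> C * \<bar>y\<bar> powr (q - 1)"
        using assms(1)[of y] \<open>y \<noteq> 0\<close> assms(3) by (simp add: abs_divide divide_le_eq mult.assoc)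
    qed
    have "((\<lambda>y. \<bar>y\<bar> powr (q - 1)) \<longlongrightarrow> 0) (at 0)"
      by (rule tendsto_zero_powrI) (auto intro!: tendsto_eq_intros simp: assms)
    then show "((\<lambda>y. C * \<bar>y\<bar> powr (q - 1)) \<longlongrightarrow> 0) (at 0)"
      using tendsto_mult_right_zero by blast
  qed
  then show ?thesis
    by (simp add: has_field_derivative_iff)
qed

lemma abs_pow_deriv:
  fixes a :: real assumes "a > 0" "t \<noteq> 0"
  shows "((\<lambda>x. \<bar>x\<bar> powr a) has_real_derivative a * (\<bar>t\<bar> powr (a - 2) * t)) (at t)"
proof -
  have e: "\<forall>\<^sub>F x in nhds t. \<bar>x\<bar> powr a = (if t > 0 then x else -x) powr a"
  proof -
    have "\<forall>\<^sub>F x in nhds t. x \<in> (if t > 0 then {0<..} else {..<0})"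
      by (rule eventually_nhds_in_open) (use assms in auto)
    then show ?thesis by eventually_elim (auto split: if_splits)
  qed
  have d: "((\<lambda>x. (if t > 0 then x else -x) powr a) has_real_derivative a * (\<bar>t\<bar> powr (a - 2) * t)) (at t)"
  proof (cases "t > 0")
    case True
    have "((\<lambda>x. x powr a) has_real_derivative a * t powr (a - 1)) (at t)"
      using True by (rule has_real_derivative_powr)
    moreover have "t powr (a - 1) = t powr (a - 2) * t"
    proof -
      have "t powr (a - 1) = t powr ((a-2) + 1)" by simp
      also have "\<dots> = t powr (a-2) * t powr 1" by (rule powr_add)
      finally show ?thesis using True by simp
    qed
    ultimately show ?thesis using True by simp
  next
    case False
    then have tn: "t < 0" using assms by auto
    have "((\<lambda>x. (-x) powr a) has_real_derivative a * (-t) powr (a - 1) * (-1)) (at t)"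
      using tn by (auto intro!: derivative_eq_intros)
    moreover have "(-t) powr (a - 1) = (-t) powr (a - 2) * (-t)"
      using tn by (simp add: powr_diff power2_eq_square)
    ultimately show ?thesis using tn by simp
  qed
  show ?thesis
    by (rule DERIV_cong_ev[OF refl e refl, THEN iffD2, OF d])
qed

lemma gg_deriv: assumes "1 < p" shows "(gg p has_real_derivative g1 p t) (at t)"
proof (cases "t = 0")
  case True
  have "(gg p has_real_derivative 0) (at 0)"
    by (rule deriv0_aux[of _ 1 "p+1"]) (use assms in \<open>auto simp: gg_def\<close>)
  then show ?thesis using True by (simp add: g1_def)
next
  case False
  have "((\<lambda>x. \<bar>x\<bar> powr (p+1)) has_real_derivative (p+1) * (\<bar>t\<bar> powr (p + 1 - 2) * t)) (at t)"
    by (rule abs_pow_deriv) (use assms False in auto)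
  then show ?thesis unfolding gg_def[abs_def] g1_def by (simp add: algebra_simps)
qed

lemma g1_deriv: assumes "1 < p" shows "(g1 p has_real_derivative g2 p t) (at t)"
proof (cases "t = 0")
  case True
  have "(g1 p has_real_derivative 0) (at 0)"
  proof (rule deriv0_aux[of _ "p+1" p])
    fix y :: real
    have "\<bar>g1 p y\<bar> = (p+1) * (\<bar>y\<bar> powr (p-1) * \<bar>y\<bar> powr 1)"
      using assms by (simp add: g1_def abs_mult)
    also have "\<dots> = (p+1) * \<bar>y\<bar> powr p"
      by (simp only: powr_add[symmetric]) simp
    finally show "\<bar>g1 p y\<bar> \<le> (p+1) * \<bar>y\<bar> powr p" by simp
  qed (use assms in \<open>auto simp: g1_def\<close>)
  then show ?thesis using True assms by (simp add: g2_def)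
next
  case False
  have "((\<lambda>x. \<bar>x\<bar> powr (p-1)) has_real_derivative (p-1) * (\<bar>t\<bar> powr (p - 1 - 2) * t)) (at t)"
    by (rule abs_pow_deriv) (use assms False in auto)
  note d1 = this
  have "((\<lambda>x. (p+1) * (\<bar>x\<bar> powr (p-1) * x)) has_real_derivative
      (p+1) * ((p-1) * (\<bar>t\<bar> powr (p - 1 - 2) * t) * t + 1 * \<bar>t\<bar> powr (p-1))) (at t)"
    by (rule DERIV_cmult[OF DERIV_mult[OF d1 DERIV_ident]])
  moreover have "\<bar>t\<bar> powr (p - 1 - 2) * t * t = \<bar>t\<bar> powr (p - 1)"
  proof -
    have "\<bar>t\<bar> powr (p - 1) = \<bar>t\<bar> powr ((p - 1 - 2) + 2)" by simp
    also have "\<dots> = \<bar>t\<bar> powr (p - 1 - 2) * \<bar>t\<bar> powr 2" by (rule powr_add)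
    also have "\<bar>t\<bar> powr 2 = t * t" using False by (simp add: power2_eq_square)
    finally show ?thesis by simp
  qed
  ultimately show ?thesis unfolding g1_def[abs_def] g2_def
    by (simp add: algebra_simps)
qed

lemma g2_nonneg: "1 < p \<Longrightarrow> g2 p t \<ge> 0"
  by (simp add: g2_def)

lemma g2_cont: "1 < p \<Longrightarrow> continuous_on S (g2 p)"
  unfolding g2_def[abs_def]
  by (intro continuous_intros continuous_on_powr') (auto intro!: continuous_intros)

lemma g1_cont: "1 < p \<Longrightarrow> continuous_on S (g1 p)"
  using g1_deriv by (meson DERIV_isCont continuous_at_imp_continuous_on)

lemma gg_cont: "1 < p \<Longrightarrow> continuous_on S (gg p)"
  using gg_deriv by (meson DERIV_isCont continuous_at_imp_continuous_on)

lemma gg_taylor: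
  assumes "1 < p"
  shows "\<exists>t. min x y \<le> t \<and> t \<le> max x y \<and> gg p y = gg p x + g1 p x * (y - x) + g2 p t / 2 * (y - x)^2"
proof (cases "y = x")
  case True then show ?thesis by (intro exI[of _ x]) auto
next
  case False
  define diff where "diff = (\<lambda>m::nat. if m = 0 then gg p else if m = 1 then g1 p else g2 p)"
  have "\<exists>t. (if y < x then y < t \<and> t < x else x < t \<and> t < y) \<and>
    gg p y = (\<Sum>m<2. (diff m x / fact m) * (y - x)^m) + (diff 2 t / fact 2) * (y - x)^2"
  proof (rule Taylor[of 2 diff "gg p" "min x y" "max x y"])
    show "\<forall>m t. m < 2 \<and> min x y \<le> t \<and> t \<le> max x y \<longrightarrow> (diff m has_real_derivative diff (Suc m) t) (at t)"
      using gg_deriv[OF assms] g1_deriv[OF assms] by (auto simp: diff_def less_2_cases_iff)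
  qed (use False in \<open>auto simp: diff_def\<close>)
  then obtain t where t: "(if y < x then y < t \<and> t < x else x < t \<and> t < y)"
    "gg p y = (\<Sum>m<2. (diff m x / fact m) * (y - x)^m) + (diff 2 t / fact 2) * (y - x)^2" by blast
  have "min x y \<le> t \<and> t \<le> max x y" using t(1) by (auto split: if_splits)
  moreover have "gg p y = gg p x + g1 p x * (y - x) + g2 p t / 2 * (y - x)^2"
    using t(2) by (simp add: diff_def numeral_2_eq_2 lessThan_Suc)
  ultimately show ?thesis by blast
qed

lemma exp_lin_deriv:
  "((\<lambda>z::complex. exp (a * (z - b))) has_field_derivative a * exp (a * (z - b))) (at z)"
  by (auto intro!: derivative_eq_intros)

lemma Dxx_formula:
  fixes j l :: "'m::finite bit0"
  shows "Dxx x0 L j l = - (1 / real (Mh TYPE('m))) *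
     (\<Sum>k\<in>{- (int (Mh TYPE('m)) div 2) .. int (Mh TYPE('m)) div 2}.
        (1 / acoef (Mh TYPE('m)) k) * (real_of_int k * (2 * pi / L))^2 *
        cos (real_of_int k * (2 * pi / L) * (gridpt x0 L j - gridpt x0 L l)))"
proof -
  define M where "M = Mh TYPE('m)"
  define K where "K = {- (int M div 2) .. int M div 2}"
  define \<sigma> where "\<sigma> = 2 * pi / L"
  define gl where "gl = gridpt x0 L l"
  define a where "a = (\<lambda>k::int. \<i> * of_int k * of_real \<sigma>)"
  define F where "F = (\<lambda>n::nat. \<lambda>z::complex. (1 / of_nat M) *
     (\<Sum>k\<in>K. of_real (1 / acoef M k) * a k ^ n * exp (a k * (z - of_real gl))))"
  have dF: "(F n has_field_derivative F (Suc n) z) (at z)" for n z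
  proof -
    have "((\<lambda>z. (1 / of_nat M) * (\<Sum>k\<in>K. of_real (1 / acoef M k) * a k ^ n * exp (a k * (z - of_real gl))))
      has_field_derivative (1 / of_nat M) * (\<Sum>k\<in>K. of_real (1 / acoef M k) * a k ^ n * (a k * exp (a k * (z - of_real gl))))) (at z)"
      by (intro DERIV_cmult DERIV_sum exp_lin_deriv) 
    then show ?thesis unfolding F_def by (simp add: mult_ac)
  qed
  have phiF: "phi x0 L l = (\<lambda>x. F 0 (of_real x))"
    by (auto simp: phi_def F_def M_def K_def a_def \<sigma>_def gl_def fun_eq_iff mult_ac)
  have v1: "(\<lambda>x. vector_derivative (phi x0 L l) (at x)) = (\<lambda>x. F 1 (of_real x))"
  proof
    fix x :: real
    show "vector_derivative (phi x0 L l) (at x) = F 1 (of_real x)"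
      unfolding phiF by (rule vector_derivative_at, rule has_vector_derivative_real_field) (use dF in simp)
  qed
  have v2: "vector_derivative (\<lambda>x. vector_derivative (phi x0 L l) (at x)) (at (gridpt x0 L j)) = F 2 (of_real (gridpt x0 L j))"
    unfolding v1 by (rule vector_derivative_at, rule has_vector_derivative_real_field) (use dF[of 1] in \<open>simp add: numeral_2_eq_2\<close>)
  have "Re (F 2 (of_real (gridpt x0 L j))) = (1 / real M) * (\<Sum>k\<in>K. (1 / acoef M k) * (- ((real_of_int k * \<sigma>)^2)) *
        cos (real_of_int k * \<sigma> * (gridpt x0 L j - gl)))"
    unfolding F_def a_def
    by (simp add: Re_sum power2_eq_square Re_exp mult_ac flip: of_real_diff)
  then show ?thesis unfolding Dxx_def v2 M_def K_def \<sigma>_def gl_def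
    by (simp add: sum_negf sum_distrib_left)
qed

lemma cos_quad_nonneg:
  fixes u a :: "'i \<Rightarrow> real"
  assumes "finite I"
  shows "(\<Sum>j\<in>I. \<Sum>l\<in>I. u j * u l * cos (a j - a l)) \<ge> 0"
proof -
  have "(\<Sum>j\<in>I. \<Sum>l\<in>I. u j * u l * cos (a j - a l)) =
        (\<Sum>j\<in>I. u j * cos (a j)) * (\<Sum>l\<in>I. u l * cos (a l)) + (\<Sum>j\<in>I. u j * sin (a j)) * (\<Sum>l\<in>I. u l * sin (a l))"
    by (simp add: cos_diff sum_product distrib_left sum.distrib mult_ac)
  also have "\<dots> \<ge> 0" by simp
  finally show ?thesis .
qed

lemma Dxx_sym: "Dxx x0 L j l = Dxx x0 L l j"
  unfolding Dxx_formula
  by (rule arg_cong[where f="\<lambda>x. - _ * x"], rule sum.cong, simp)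
     (metis cos_minus minus_diff_eq mult_minus_right)

lemma acoef_pos: "acoef M k > 0" by (simp add: acoef_def)

lemma Dxx_psd:
  fixes u :: "'m::finite grid"
  shows "(\<Sum>j\<in>UNIV. \<Sum>l\<in>UNIV. Dxx x0 L j l * u $ l * u $ j) \<le> 0"
proof -
  define M where "M = Mh TYPE('m)"
  define K where "K = {- (int M div 2) .. int M div 2}"
  define w where "w = (\<lambda>k. (1 / acoef M k) * (real_of_int k * (2 * pi / L))^2)"
  define a where "a = (\<lambda>k::int. \<lambda>j::'m bit0. real_of_int k * (2 * pi / L) * gridpt x0 L j)"
  have D: "Dxx x0 L j l = - (1 / real M) * (\<Sum>k\<in>K. w k * cos (a k j - a k l))" for j l
    unfolding Dxx_formula M_def K_def w_def a_def by (simp add: right_diff_distrib)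
  have "(\<Sum>j\<in>UNIV. \<Sum>l\<in>UNIV. Dxx x0 L j l * u $ l * u $ j) =
     - (1 / real M) * (\<Sum>k\<in>K. w k * (\<Sum>j\<in>UNIV. \<Sum>l\<in>UNIV. u $ j * u $ l * cos (a k j - a k l)))"
    unfolding D
    by (simp add: sum_distrib_left sum_distrib_right sum_negf mult_ac sum.swap[of _ K])
  also have "\<dots> \<le> 0"
  proof -
    have "(\<Sum>k\<in>K. w k * (\<Sum>j\<in>UNIV. \<Sum>l\<in>UNIV. u $ j * u $ l * cos (a k j - a k l))) \<ge> 0"
      by (intro sum_nonneg mult_nonneg_nonneg cos_quad_nonneg) (auto simp: w_def acoef_pos less_imp_le)
    then show ?thesis by (simp add: M_def)
  qed
  finally show ?thesis .
qed

lemma ift_deriv: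
  fixes H :: "'a::real_normed_vector \<times> real \<Rightarrow> real" and r :: "'a \<Rightarrow> real"
  assumes dH: "(H has_derivative (\<lambda>z. A (fst z) + b * snd z)) (at (x0, r x0))"
    and A: "bounded_linear A" and b: "b \<noteq> 0"
    and cont: "continuous (at x0) r"
    and zero: "\<forall>\<^sub>F y in at x0. H (y, r y) = 0" and z0: "H (x0, r x0) = 0"
  shows "(r has_derivative (\<lambda>k. - A k / b)) (at x0)"
proof -
  obtain KA where KA: "\<And>k. norm (A k) \<le> norm k * KA" "KA > 0"
    using bounded_linear.pos_bounded[OF A] by blast
  have lin: "bounded_linear (\<lambda>k. - A k / b)"
    using bounded_linear_compose[OF bounded_linear_divide[of b] bounded_linear_minus[OF A]] by simp
  show ?thesis
  unfolding has_derivative_at_alt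
  proof (intro conjI lin allI impI)
    fix e :: real assume e: "e > 0"
    define C where "C = 2 * (KA + \<bar>b\<bar>) / \<bar>b\<bar>"
    define \<eta> where "\<eta> = min (\<bar>b\<bar> / 2) (e * \<bar>b\<bar> / (1 + C))"
    have C: "C > 0" using KA b by (simp add: C_def)
    have \<eta>: "\<eta> > 0" using b e C by (simp add: \<eta>_def)
    obtain d1 where d1: "d1 > 0" "\<And>z. norm (z - (x0, r x0)) < d1 \<Longrightarrow>
        norm (H z - H (x0, r x0) - (A (fst (z - (x0, r x0))) + b * snd (z - (x0, r x0)))) \<le> \<eta> * norm (z - (x0, r x0))"
      using dH[unfolded has_derivative_at_alt] \<eta> by blast
    obtain d2 where d2: "d2 > 0" "\<And>y. dist y x0 < d2 \<Longrightarrow> dist (r y) (r x0) < d1 / 2"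
      using cont[unfolded continuous_at_eps_delta] d1 by (meson half_gt_zero)
    obtain d3 where d3: "d3 > 0" "\<And>y. y \<noteq> x0 \<Longrightarrow> dist y x0 < d3 \<Longrightarrow> H (y, r y) = 0"
      using zero[unfolded eventually_at] by blast
    define d where "d = min (min d2 d3) (d1 / 2)"
    show "\<exists>d>0. \<forall>y. norm (y - x0) < d \<longrightarrow> norm (r y - r x0 - - A (y - x0) / b) \<le> e * norm (y - x0)"
    proof (intro exI[of _ d] conjI allI impI)
      show "d > 0" using d1 d2 d3 by (simp add: d_def)
      fix y assume y: "norm (y - x0) < d"
      show "norm (r y - r x0 - - A (y - x0) / b) \<le> e * norm (y - x0)"
      proof (cases "y = x0")
        case True then show ?thesis using linear_simps(3)[OF A] by simp
      next
        case False
        define k where "k = y - x0"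
        define \<sigma> where "\<sigma> = r y - r x0"
        have Hy: "H (y, r y) = 0" using d3(2)[OF False] y by (simp add: d_def dist_norm)
        have s1: "\<bar>\<sigma>\<bar> < d1 / 2" using d2(2)[of y] y by (simp add: d_def dist_norm \<sigma>_def dist_real_def)
        have kp: "(y, r y) - (x0, r x0) = (k, \<sigma>)" by (simp add: k_def \<sigma>_def)
        have nz: "norm ((y, r y) - (x0, r x0)) \<le> norm k + \<bar>\<sigma>\<bar>"
          unfolding kp using norm_Pair_le[of k \<sigma>] by simp
        have "norm k < d1 / 2" using y by (simp add: k_def d_def)
        then have "norm ((y, r y) - (x0, r x0)) < d1" using nz s1 by linarith
        from d1(2)[OF this] Hy z0
        have E0: "\<bar>A k + b * \<sigma>\<bar> \<le> \<eta> * norm ((y, r y) - (x0, r x0))"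
          unfolding kp by simp
        have E: "\<bar>A k + b * \<sigma>\<bar> \<le> \<eta> * (norm k + \<bar>\<sigma>\<bar>)"
          using E0 mult_left_mono[OF nz, of \<eta>] \<eta> by linarith
        have Ak: "\<bar>A k\<bar> \<le> KA * norm k" using KA(1)[of k] by (simp add: mult.commute)
        have "\<bar>b\<bar> * \<bar>\<sigma>\<bar> \<le> KA * norm k + \<eta> * (norm k + \<bar>\<sigma>\<bar>)"
        proof -
          have "\<bar>b * \<sigma>\<bar> \<le> \<bar>A k + b * \<sigma>\<bar> + \<bar>A k\<bar>" by linarith
          then show ?thesis using E Ak by (simp add: abs_mult)
        qed
        moreover have "\<eta> \<le> \<bar>b\<bar> / 2" unfolding \<eta>_def by (rule min.cobounded1)
        then have "\<eta> * (norm k + \<bar>\<sigma>\<bar>) \<le> \<bar>b\<bar> / 2 * (norm k + \<bar>\<sigma>\<bar>)"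
          by (intro mult_right_mono) auto
        ultimately have "\<bar>b\<bar> * \<bar>\<sigma>\<bar> \<le> KA * norm k + \<bar>b\<bar> / 2 * (norm k + \<bar>\<sigma>\<bar>)"
          by linarith
        moreover have "\<bar>b\<bar> / 2 * (norm k + \<bar>\<sigma>\<bar>) = (\<bar>b\<bar> * \<bar>\<sigma>\<bar> + \<bar>b\<bar> * norm k) / 2"
          by (simp add: algebra_simps)
        moreover have aux: "\<And>(X::real) (P::real) (Q::real) (R::real). X \<le> P + R \<Longrightarrow> R = (X + Q)/2 \<Longrightarrow> X \<le> 2*P + Q" by (simp add: field_simps)
        ultimately have "\<bar>b\<bar> * \<bar>\<sigma>\<bar> \<le> 2 * (KA * norm k) + \<bar>b\<bar> * norm k"
          by blast
        also have "\<dots> \<le> 2 * (KA + \<bar>b\<bar>) * norm k"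
          by (simp add: algebra_simps)
        finally have "\<bar>b\<bar> * \<bar>\<sigma>\<bar> \<le> 2 * (KA + \<bar>b\<bar>) * norm k" .
        note B = this
        have sig: "\<bar>\<sigma>\<bar> \<le> C * norm k"
        proof -
          have "\<bar>\<sigma>\<bar> = (\<bar>b\<bar> * \<bar>\<sigma>\<bar>) / \<bar>b\<bar>" using b by simp
          also have "\<dots> \<le> (2 * (KA + \<bar>b\<bar>) * norm k) / \<bar>b\<bar>"
            by (rule divide_right_mono[OF B]) simp
          also have "\<dots> = C * norm k" by (simp add: C_def)
          finally show ?thesis .
        qed
        have "\<sigma> + A k / b = (A k + b * \<sigma>) / b" using b by (simp add: field_simps)
        then have "\<bar>\<sigma> + A k / b\<bar> = \<bar>A k + b * \<sigma>\<bar> / \<bar>b\<bar>"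
          by (simp add: abs_divide)
        also have "\<dots> \<le> \<eta> * (norm k + \<bar>\<sigma>\<bar>) / \<bar>b\<bar>"
          by (rule divide_right_mono[OF E]) simp
        also have "\<dots> \<le> \<eta> * (norm k + C * norm k) / \<bar>b\<bar>"
          by (intro divide_right_mono mult_left_mono) (use sig \<eta> in auto)
        also have "\<dots> = (\<eta> * (1 + C)) * norm k / \<bar>b\<bar>"
          by (simp add: algebra_simps)
        also have "\<dots> \<le> (e * \<bar>b\<bar>) * norm k / \<bar>b\<bar>"
        proof -
          have "\<eta> \<le> e * \<bar>b\<bar> / (1 + C)" unfolding \<eta>_def by (rule min.cobounded2)
          then have "\<eta> * (1 + C) \<le> e * \<bar>b\<bar>"
            using C by (simp add: pos_le_divide_eq)
          then show ?thesis
            by (intro divide_right_mono mult_right_mono) auto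
        qed
        also have "\<dots> = e * norm k" using b by simp
        finally show ?thesis by (simp add: k_def \<sigma>_def)
      qed
    qed
  qed
qed

lemma g1_mul_self: "g1 p t * t = (p+1) * gg p t"
proof (cases "t = 0")
  case True then show ?thesis by (simp add: g1_def gg_def)
next
  case False
  have e: "p + 1 = (p - 1) + 2" by simp
  have "\<bar>t\<bar> powr (p+1) = \<bar>t\<bar> powr ((p-1) + 2)" by (simp only: e)
  also have "\<dots> = \<bar>t\<bar> powr (p-1) * \<bar>t\<bar> powr 2" by (rule powr_add)
  also have "\<bar>t\<bar> powr 2 = t * t" using False by (simp add: power2_eq_square)
  finally show ?thesis by (simp add: g1_def gg_def mult_ac add.commute)
qed

lemma gg_nonneg: "gg p t \<ge> 0" by (simp add: gg_def)

lemma g2_bound: "1 < p \<Longrightarrow> \<bar>t\<bar> \<le> R \<Longrightarrow> g2 p t \<le> (p+1) * p * R powr (p-1)"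
  unfolding g2_def by (intro mult_left_mono powr_mono2) auto

lemma sum_sq_le_norm: "x $ j * x $ j \<le> (norm (x :: real^'n))^2"
proof -
  have "\<bar>x $ j\<bar> \<le> norm x" using component_le_norm_cart[of x j] by simp
  then have "\<bar>x $ j\<bar> * \<bar>x $ j\<bar> \<le> norm x * norm x" by (intro mult_mono) auto
  then show ?thesis by (simp add: power2_eq_square abs_mult[symmetric])
qed

lemma norm_sq_sum: "(norm (x :: real^'n))^2 = (\<Sum>j\<in>UNIV. x $ j * x $ j)"
  by (simp add: power2_norm_eq_inner inner_vec_def)

lemma bilin_bound:
  fixes u :: "real^'n"
  shows "\<bar>\<Sum>j\<in>UNIV. \<Sum>l\<in>UNIV. B j l * u $ l * u $ j\<bar> \<le> (\<Sum>j\<in>UNIV. \<Sum>l\<in>UNIV. \<bar>B j l\<bar>) * (norm u)^2"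
proof -
  have "\<bar>\<Sum>j\<in>UNIV. \<Sum>l\<in>UNIV. B j l * u $ l * u $ j\<bar> \<le> (\<Sum>j\<in>UNIV. \<Sum>l\<in>UNIV. \<bar>B j l * u $ l * u $ j\<bar>)"
    by (rule order_trans[OF sum_abs], rule sum_mono, rule sum_abs)
  also have "\<dots> \<le> (\<Sum>j\<in>UNIV. \<Sum>l\<in>UNIV. \<bar>B j l\<bar> * (norm u)^2)"
  proof (intro sum_mono)
    fix j l
    have "\<bar>u $ l\<bar> \<le> norm u" "\<bar>u $ j\<bar> \<le> norm u" using component_le_norm_cart by (metis real_norm_def)+
    then have "\<bar>u $ l\<bar> * \<bar>u $ j\<bar> \<le> norm u * norm u" by (intro mult_mono) auto
    then show "\<bar>B j l * u $ l * u $ j\<bar> \<le> \<bar>B j l\<bar> * (norm u)^2"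
      by (simp add: abs_mult power2_eq_square mult.assoc mult_left_mono)
  qed
  also have "\<dots> = (\<Sum>j\<in>UNIV. \<Sum>l\<in>UNIV. \<bar>B j l\<bar>) * (norm u)^2"
    by (simp add: sum_distrib_right)
  finally show ?thesis .
qed

locale gsl =
  fixes x0 L :: real and V :: "real \<Rightarrow> real" and \<omega> p lams :: real and us :: "'m::finite grid"
  assumes L_pos: "L > 0" and p1: "1 < p" and usS: "normq_h L (p + 1) us = 1"
    and multi: "\<forall>j. A_h x0 L V \<omega> us $ j = lams * (\<bar>us $ j\<bar> powr (p - 1) * us $ j)"
begin

definition h where "h = hh L TYPE('m)"
definition F :: "'m grid \<Rightarrow> real" where "F v = (\<Sum>j\<in>UNIV. gg p (v $ j))"
definition gv :: "'m grid \<Rightarrow> 'm grid" where "gv v = (\<chi> j. g1 p (v $ j))"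
definition bv where "bv = gv us"
definition Am where "Am j l = - Dxx x0 L j l / 2 + (if j = l then V (gridpt x0 L j) + \<omega> else 0)"

lemma h_pos: "h > 0"
  using L_pos by (simp add: h_def hh_def Mh_def)

lemma F_nonneg: "F v \<ge> 0" by (simp add: F_def gg_nonneg sum_nonneg)

lemma normq_eq: "normq_h L (p+1) v = (h * F v) powr (1/(p+1))"
  by (simp add: normq_h_def h_def F_def gg_def)

lemma powr_eq_one_iff: "(X::real) \<ge> 0 \<Longrightarrow> q > 0 \<Longrightarrow> X powr (1/q) = 1 \<longleftrightarrow> X = 1"
proof
  assume X: "X \<ge> 0" "q > 0" "X powr (1/q) = 1"
  have "(X powr (1/q)) powr q = X powr (1/q * q)" by (simp add: powr_powr)
  also have "\<dots> = X" using X by simp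
  finally show "X = 1" using X by simp
qed simp

lemma normq_one: "normq_h L (p+1) v = 1 \<longleftrightarrow> h * F v = 1"
  unfolding normq_eq using h_pos F_nonneg p1 by (intro powr_eq_one_iff) auto

lemma hF_us: "h * F us = 1" using usS normq_one by blast

lemma inner_gv_self: "inner (gv v) v = (p+1) * F v"
  by (simp add: inner_vec_def gv_def F_def g1_mul_self sum_distrib_left)

lemma inner_bv_us: "inner bv us = (p+1) / h"
  using inner_gv_self[of us] hF_us h_pos by (simp add: bv_def field_simps)

lemma tangent_iff: "\<xi> \<in> tangent_h L p us \<longleftrightarrow> inner bv \<xi> = 0"
proof -
  have "inner_h L (powu p us) \<xi> = h / (p+1) * inner bv \<xi>"
    using p1 by (simp add: inner_h_def powu_def h_def bv_def gv_def g1_def inner_vec_def sum_distrib_left mult_ac)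
  then show ?thesis using h_pos p1 by (simp add: tangent_h_def)
qed

lemma A_expand: "A_h x0 L V \<omega> u $ j = (\<Sum>l\<in>UNIV. Am j l * u $ l)"
proof -
  have "(\<Sum>l\<in>UNIV. Am j l * u $ l) = (\<Sum>l\<in>UNIV. - Dxx x0 L j l / 2 * u $ l)
      + (\<Sum>l\<in>UNIV. (if j = l then V (gridpt x0 L j) + \<omega> else 0) * u $ l)"
    unfolding Am_def by (simp only: distrib_right sum.distrib)
  also have "(\<Sum>l\<in>UNIV. (if j = l then V (gridpt x0 L j) + \<omega> else 0) * u $ l) = (V (gridpt x0 L j) + \<omega>) * u $ j"
  proof -
    have "\<And>l. (if j = l then V (gridpt x0 L j) + \<omega> else 0) * u $ l = (if j = l then (V (gridpt x0 L j) + \<omega>) * u $ j else 0)"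
      by auto
    then show ?thesis by (simp only: sum.delta) simp
  qed
  also have "(\<Sum>l\<in>UNIV. - Dxx x0 L j l / 2 * u $ l) = - (\<Sum>l\<in>UNIV. Dxx x0 L j l * u $ l) / 2"
    by (simp add: sum_negf sum_divide_distrib)
  finally show ?thesis by (simp add: A_h_def Dxx_app_def)
qed

end

context gsl begin

lemma inner_h_eq:
  fixes u v a b :: "'m grid"
  shows "inner_h L u v = h * inner u v"
  by (simp add: inner_h_def h_def inner_vec_def)

lemma normsq_eq:
  fixes u v a b :: "'m grid"
  shows "normsq_h L u = h * (norm u)^2"
  by (simp add: normsq_h_def inner_h_eq power2_norm_eq_inner)

lemma semi1sq_eq:
  fixes u v a b :: "'m grid"
  shows "semi1sq_h x0 L u = - h * (\<Sum>j\<in>UNIV. \<Sum>l\<in>UNIV. Dxx x0 L j l * u $ l * u $ j)"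
  by (simp add: semi1sq_h_def inner_h_eq inner_vec_def Dxx_app_def sum_distrib_right sum_negf)

lemma semi1sq_nonneg:
  fixes u v a b :: "'m grid"
  shows "semi1sq_h x0 L u \<ge> 0"
proof -
  have "h * (\<Sum>j\<in>UNIV. \<Sum>l\<in>UNIV. Dxx x0 L j l * u $ l * u $ j) \<le> 0"
    using Dxx_psd[of x0 L u] h_pos by (intro mult_nonneg_nonpos) auto
  then show ?thesis unfolding semi1sq_eq by simp
qed

lemma norm1_sq:
  fixes u v a b :: "'m grid"
  shows "(norm1_h x0 L u)^2 = normsq_h L u + semi1sq_h x0 L u"
proof -
  have "normsq_h L u \<ge> 0" using normsq_eq[of u] h_pos by simp
  then have "0 \<le> normsq_h L u + semi1sq_h x0 L u" using semi1sq_nonneg[of u] by linarith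
  then show ?thesis unfolding norm1_h_def by (rule real_sqrt_pow2)
qed

lemma norm1_nonneg:
  fixes u v a b :: "'m grid"
  shows "norm1_h x0 L u \<ge> 0"
proof -
  have "normsq_h L u \<ge> 0" using normsq_eq[of u] h_pos by simp
  then have "0 \<le> normsq_h L u + semi1sq_h x0 L u" using semi1sq_nonneg[of u] by linarith
  then show ?thesis by (simp add: norm1_h_def)
qed

lemma norm1_lower:
  fixes u v a b :: "'m grid"
  shows "h * (norm u)^2 \<le> (norm1_h x0 L u)^2"
  using norm1_sq[of u] semi1sq_nonneg[of u] normsq_eq[of u] by simp

definition CN where "CN = h + h * (\<Sum>j\<in>(UNIV::'m bit0 set). \<Sum>l\<in>UNIV. \<bar>Dxx x0 L j l\<bar>)"

lemma CN_pos:
  fixes u v a b :: "'m grid"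
  shows "CN > 0"
proof -
  have "(\<Sum>j\<in>(UNIV::'m bit0 set). \<Sum>l\<in>UNIV. \<bar>Dxx x0 L j l\<bar>) \<ge> 0" by (simp add: sum_nonneg)
  then have "h * (\<Sum>j\<in>(UNIV::'m bit0 set). \<Sum>l\<in>UNIV. \<bar>Dxx x0 L j l\<bar>) \<ge> 0" using h_pos by simp
  then show ?thesis unfolding CN_def using h_pos by linarith
qed

lemma norm1_upper:
  fixes u v a b :: "'m grid"
  shows "(norm1_h x0 L u)^2 \<le> CN * (norm u)^2"
proof -
  have "semi1sq_h x0 L u \<le> h * ((\<Sum>j\<in>(UNIV::'m bit0 set). \<Sum>l\<in>UNIV. \<bar>Dxx x0 L j l\<bar>) * (norm u)^2)"
  proof -
    have "- (\<Sum>j\<in>(UNIV::'m bit0 set). \<Sum>l\<in>UNIV. Dxx x0 L j l * u $ l * u $ j) \<le> (\<Sum>j\<in>(UNIV::'m bit0 set). \<Sum>l\<in>UNIV. \<bar>Dxx x0 L j l\<bar>) * (norm u)^2"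
      using bilin_bound[of "Dxx x0 L" u] by (simp add: abs_le_iff)
    then have "h * (- (\<Sum>j\<in>(UNIV::'m bit0 set). \<Sum>l\<in>UNIV. Dxx x0 L j l * u $ l * u $ j)) \<le> h * ((\<Sum>j\<in>(UNIV::'m bit0 set). \<Sum>l\<in>UNIV. \<bar>Dxx x0 L j l\<bar>) * (norm u)^2)"
      using h_pos by (intro mult_left_mono) auto
    then show ?thesis unfolding semi1sq_eq by simp
  qed
  moreover have "CN * (norm u)^2 = h * (norm u)^2 + h * ((\<Sum>j\<in>(UNIV::'m bit0 set). \<Sum>l\<in>UNIV. \<bar>Dxx x0 L j l\<bar>) * (norm u)^2)"
    unfolding CN_def by (simp only: ring_distribs)
  ultimately show ?thesis using norm1_sq[of u] normsq_eq[of u] by linarith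
qed

lemma Q_eq:
  fixes u v a b :: "'m grid"
  shows "Q_h x0 L V \<omega> u = inner_h L (A_h x0 L V \<omega> u) u"
proof -
  have e: "\<And>j. A_h x0 L V \<omega> u $ j * u $ j = (- (Dxx_app x0 L u $ j) * u $ j) / 2 + V (gridpt x0 L j) * \<bar>u $ j\<bar>^2 + \<omega> * (u $ j * u $ j)"
    by (simp add: A_h_def algebra_simps power2_eq_square)
  have "inner_h L (A_h x0 L V \<omega> u) u = h * (\<Sum>j\<in>UNIV. A_h x0 L V \<omega> u $ j * u $ j)"
    by (simp add: inner_h_def h_def)
  also have "\<dots> = h * ((\<Sum>j\<in>UNIV. - (Dxx_app x0 L u $ j) * u $ j) / 2 + (\<Sum>j\<in>UNIV. V (gridpt x0 L j) * \<bar>u $ j\<bar>^2)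
      + \<omega> * (\<Sum>j\<in>UNIV. u $ j * u $ j))"
    unfolding e by (simp only: sum.distrib sum_divide_distrib sum_distrib_left)
  also have "\<dots> = Q_h x0 L V \<omega> u"
    by (simp add: Q_h_def semi1sq_h_def normsq_h_def inner_h_def h_def distrib_left)
  finally show ?thesis by simp
qed

lemma Am_sym:
  fixes u v a b :: "'m grid"
  shows "Am j l = Am l j"
  by (simp add: Am_def Dxx_sym[of x0 L j l])

lemma A_sym:
  fixes u v a b :: "'m grid"
  shows "inner (A_h x0 L V \<omega> u) v = inner (A_h x0 L V \<omega> v) u"
proof -
  have "inner (A_h x0 L V \<omega> u) v = (\<Sum>j\<in>UNIV. \<Sum>l\<in>UNIV. Am j l * u $ l * v $ j)"
    by (simp add: inner_vec_def A_expand sum_distrib_right)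
  also have "\<dots> = (\<Sum>l\<in>UNIV. \<Sum>j\<in>UNIV. Am l j * v $ j * u $ l)"
    by (subst sum.swap) (simp add: Am_sym mult_ac)
  also have "\<dots> = inner (A_h x0 L V \<omega> v) u"
    by (simp add: inner_vec_def A_expand sum_distrib_right)
  finally show ?thesis .
qed

lemma A_add:
  fixes u v a b :: "'m grid"
  shows "A_h x0 L V \<omega> (u + v) = A_h x0 L V \<omega> u + A_h x0 L V \<omega> v"
  by (simp add: vec_eq_iff A_expand distrib_left sum.distrib)

lemma A_scale:
  fixes u v a b :: "'m grid"
  shows "A_h x0 L V \<omega> (c *\<^sub>R u) = c *\<^sub>R A_h x0 L V \<omega> u"
  by (simp add: vec_eq_iff A_expand sum_distrib_left mult_ac)

lemma Q_add:
  fixes u v a b :: "'m grid"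
  shows "Q_h x0 L V \<omega> (a + b) = Q_h x0 L V \<omega> a + 2 * inner_h L (A_h x0 L V \<omega> a) b + Q_h x0 L V \<omega> b"
  unfolding Q_eq inner_h_eq A_add
  by (simp add: inner_add_left inner_add_right A_sym[of b a] ring_distribs)

lemma Q_scale:
  fixes u v a b :: "'m grid"
  shows "Q_h x0 L V \<omega> (c *\<^sub>R a) = c^2 * Q_h x0 L V \<omega> a"
  unfolding Q_eq inner_h_eq A_scale by (simp add: power2_eq_square)

definition CQ where "CQ = h * (\<Sum>j\<in>(UNIV::'m bit0 set). \<Sum>l\<in>UNIV. \<bar>Am j l\<bar>)"

lemma Q_bound:
  fixes u v a b :: "'m grid"
  shows "\<bar>Q_h x0 L V \<omega> u\<bar> \<le> CQ * (norm u)^2"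
proof -
  have "Q_h x0 L V \<omega> u = h * (\<Sum>j\<in>UNIV. \<Sum>l\<in>UNIV. Am j l * u $ l * u $ j)"
    unfolding Q_eq inner_h_eq by (simp add: inner_vec_def A_expand sum_distrib_right)
  then show ?thesis using bilin_bound[of Am u] h_pos
    by (simp add: CQ_def abs_mult mult.assoc mult_left_mono)
qed

lemma CQ_nonneg:
  fixes u v a b :: "'m grid"
  shows "CQ \<ge> 0" using h_pos by (simp add: CQ_def sum_nonneg)

lemma A_us:
  fixes u v a b :: "'m grid"
  shows "inner_h L (A_h x0 L V \<omega> us) v = lams * h / (p+1) * inner bv v"
proof -
  have "inner_h L (A_h x0 L V \<omega> us) v = h * (\<Sum>j\<in>UNIV. lams * (\<bar>us $ j\<bar> powr (p - 1) * us $ j) * v $ j)"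
    using multi by (simp add: inner_h_eq inner_vec_def)
  also have "\<dots> = lams * h / (p+1) * (\<Sum>j\<in>UNIV. (p+1) * (\<bar>us $ j\<bar> powr (p - 1) * us $ j) * v $ j)"
    using p1 by (simp add: sum_distrib_left mult_ac)
  also have "\<dots> = lams * h / (p+1) * inner bv v"
    by (simp add: inner_vec_def bv_def gv_def g1_def)
  finally show ?thesis .
qed

lemma Q_us:
  fixes u v a b :: "'m grid"
  shows "Q_h x0 L V \<omega> us = lams"
  using A_us[of us] inner_bv_us h_pos p1 by (simp add: Q_eq)

end

context gsl begin

lemma F_taylor:
  fixes v w :: "'m grid"
  shows "\<exists>t. (\<forall>j. min (v$j) (w$j) \<le> t j \<and> t j \<le> max (v$j) (w$j)) \<and>
     F w = F v + inner (gv v) (w - v) + (\<Sum>j\<in>UNIV. g2 p (t j) / 2 * (w$j - v$j)^2)"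
proof -
  have "\<forall>j. \<exists>t. min (v$j) (w$j) \<le> t \<and> t \<le> max (v$j) (w$j) \<and>
      gg p (w$j) = gg p (v$j) + g1 p (v$j) * (w$j - v$j) + g2 p t / 2 * (w$j - v$j)^2"
    using gg_taylor[OF p1] by blast
  then obtain t where t: "\<And>j. min (v$j) (w$j) \<le> t j \<and> t j \<le> max (v$j) (w$j) \<and>
      gg p (w$j) = gg p (v$j) + g1 p (v$j) * (w$j - v$j) + g2 p (t j) / 2 * (w$j - v$j)^2"
    by metis
  have "F w = F v + inner (gv v) (w - v) + (\<Sum>j\<in>UNIV. g2 p (t j) / 2 * (w$j - v$j)^2)"
    unfolding F_def using t by (simp add: inner_vec_def gv_def sum.distrib)
  then show ?thesis using t by blast
qed

lemma F_lower:
  fixes v w :: "'m grid"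
  shows "F v + inner (gv v) (w - v) \<le> F w"
proof -
  obtain t where t: "F w = F v + inner (gv v) (w - v) + (\<Sum>j\<in>UNIV. g2 p (t j) / 2 * (w$j - v$j)^2)"
    using F_taylor by blast
  have "(\<Sum>j\<in>UNIV. g2 p (t j) / 2 * (w$j - v$j)^2) \<ge> 0"
    using g2_nonneg[OF p1] by (simp add: sum_nonneg)
  then show ?thesis using t by linarith
qed

definition KR :: "real \<Rightarrow> real" where "KR R = (p+1) * p * R powr (p-1)"

lemma KR_nonneg: "KR R \<ge> 0" using p1 by (simp add: KR_def)

lemma F_upper:
  fixes v w :: "'m grid"
  assumes "norm v \<le> R" "norm w \<le> R"
  shows "F w \<le> F v + inner (gv v) (w - v) + KR R / 2 * (norm (w - v))^2"
proof -
  obtain t where t: "\<forall>j. min (v$j) (w$j) \<le> t j \<and> t j \<le> max (v$j) (w$j)"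
     "F w = F v + inner (gv v) (w - v) + (\<Sum>j\<in>UNIV. g2 p (t j) / 2 * (w$j - v$j)^2)"
    using F_taylor by blast
  have "(\<Sum>j\<in>UNIV. g2 p (t j) / 2 * (w$j - v$j)^2) \<le> (\<Sum>j\<in>UNIV. KR R / 2 * (w$j - v$j)^2)"
  proof (rule sum_mono)
    fix j
    have "\<bar>v$j\<bar> \<le> R" "\<bar>w$j\<bar> \<le> R" using assms component_le_norm_cart[of v j] component_le_norm_cart[of w j] by auto
    then have "\<bar>t j\<bar> \<le> R" using t(1)[rule_format, of j] by (auto simp: abs_le_iff min_def max_def split: if_splits)
    then have "g2 p (t j) \<le> KR R" using g2_bound[OF p1] by (simp add: KR_def)
    then show "g2 p (t j) / 2 * (w$j - v$j)^2 \<le> KR R / 2 * (w$j - v$j)^2"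
      by (intro mult_right_mono) auto
  qed
  also have "\<dots> = KR R / 2 * (norm (w - v))^2"
    unfolding norm_sq_sum by (simp add: sum_distrib_left power2_eq_square)
  finally show ?thesis using t(2) by linarith
qed

lemma normq_comp:
  fixes \<xi> :: "'m grid"
  shows "h powr (1/(p+1)) * \<bar>\<xi>$j\<bar> \<le> normq_h L (p+1) \<xi>"
proof -
  have "h * gg p (\<xi>$j) \<le> h * F \<xi>"
    unfolding F_def using h_pos
    by (intro mult_left_mono member_le_sum) (auto simp: gg_nonneg)
  then have "(h * gg p (\<xi>$j)) powr (1/(p+1)) \<le> (h * F \<xi>) powr (1/(p+1))"
    using h_pos p1 by (intro powr_mono2) (auto simp: gg_nonneg)
  moreover have "(h * gg p (\<xi>$j)) powr (1/(p+1)) = h powr (1/(p+1)) * \<bar>\<xi>$j\<bar>"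
    using h_pos p1 by (simp add: gg_def powr_mult powr_powr)
  ultimately show ?thesis by (simp add: normq_eq)
qed

definition Cq1 where "Cq1 = real CARD('m bit0) / (h powr (1/(p+1)))^2"

lemma norm_le_normq:
  fixes \<xi> :: "'m grid"
  shows "(norm \<xi>)^2 \<le> Cq1 * (normq_h L (p+1) \<xi>)^2"
proof -
  have hp: "h powr (1/(p+1)) > 0" using h_pos by simp
  have "\<xi>$j * \<xi>$j \<le> (normq_h L (p+1) \<xi>)^2 / (h powr (1/(p+1)))^2" for j
  proof -
    have "(h powr (1/(p+1)) * \<bar>\<xi>$j\<bar>)^2 \<le> (normq_h L (p+1) \<xi>)^2"
      using normq_comp[of \<xi> j] hp by (intro power_mono) auto
    then show ?thesis using hp by (simp add: field_simps power2_eq_square abs_mult[symmetric])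
  qed
  then have "(\<Sum>j\<in>(UNIV::'m bit0 set). \<xi>$j * \<xi>$j) \<le> (\<Sum>j\<in>(UNIV::'m bit0 set). (normq_h L (p+1) \<xi>)^2 / (h powr (1/(p+1)))^2)"
    by (intro sum_mono) auto
  then show ?thesis by (simp add: norm_sq_sum Cq1_def)
qed

definition Cq2 where "Cq2 = (h * real CARD('m bit0)) powr (1/(p+1))"

lemma normq_le_norm:
  fixes \<xi> :: "'m grid"
  shows "normq_h L (p+1) \<xi> \<le> Cq2 * norm \<xi>"
proof -
  have "F \<xi> \<le> (\<Sum>j\<in>(UNIV::'m bit0 set). norm \<xi> powr (p+1))"
    unfolding F_def gg_def using p1
    by (intro sum_mono powr_mono2) (auto intro: component_le_norm_cart[of \<xi>, unfolded real_norm_def])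
  then have "h * F \<xi> \<le> h * real CARD('m bit0) * norm \<xi> powr (p+1)"
    using h_pos by (simp add: mult.assoc)
  then have "(h * F \<xi>) powr (1/(p+1)) \<le> (h * real CARD('m bit0) * norm \<xi> powr (p+1)) powr (1/(p+1))"
    using h_pos p1 F_nonneg by (intro powr_mono2) auto
  also have "\<dots> = Cq2 * norm \<xi>"
    using h_pos p1 by (simp add: Cq2_def powr_mult powr_powr)
  finally show ?thesis by (simp add: normq_eq)
qed

lemma Cq_pos: "Cq1 > 0" "Cq2 > 0"
  using h_pos by (auto simp: Cq1_def Cq2_def)

end

context gsl begin

lemma F_deriv:
  fixes v :: "'m grid"
  shows "(F has_derivative (\<lambda>k. inner (gv v) k)) (at v within S)"
proof -
  have "((\<lambda>y. \<Sum>j\<in>UNIV. gg p (y $ j)) has_derivative (\<lambda>k. \<Sum>j\<in>UNIV. k $ j * g1 p (v $ j))) (at v within S)"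
  proof (rule has_derivative_sum)
    fix j :: "'m bit0"
    have "((\<lambda>y. y $ j) has_derivative (\<lambda>k. k $ j)) (at v within S)"
      by (rule bounded_linear_imp_has_derivative) (rule bounded_linear_vec_nth)
    then show "((\<lambda>y. gg p (y $ j)) has_derivative (\<lambda>k. k $ j * g1 p (v $ j))) (at v within S)"
      by (rule DERIV_compose_FDERIV[OF gg_deriv[OF p1]])
  qed
  then show ?thesis unfolding F_def[abs_def]
    by (simp add: inner_vec_def gv_def mult.commute)
qed

lemma F_cont: "continuous (at v within S) F"
  using F_deriv has_derivative_continuous by blast

definition psi :: "'m grid \<Rightarrow> real \<Rightarrow> real" where
  "psi x s = h * F ((1 + s) *\<^sub>R us + x) - 1"
definition Dp :: "'m grid \<Rightarrow> real \<Rightarrow> real" where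
  "Dp x s = h * inner (gv ((1 + s) *\<^sub>R us + x)) us"

lemma psi_tangent: "psi x s + Dp x s * (s' - s) \<le> psi x s'"
proof -
  have "F ((1 + s) *\<^sub>R us + x) + inner (gv ((1 + s) *\<^sub>R us + x)) (((1 + s') *\<^sub>R us + x) - ((1 + s) *\<^sub>R us + x))
     \<le> F ((1 + s') *\<^sub>R us + x)" by (rule F_lower)
  moreover have "((1 + s') *\<^sub>R us + x) - ((1 + s) *\<^sub>R us + x) = (s' - s) *\<^sub>R us"
    by (simp add: algebra_simps)
  ultimately have "F ((1 + s) *\<^sub>R us + x) + (s' - s) * inner (gv ((1 + s) *\<^sub>R us + x)) us \<le> F ((1 + s') *\<^sub>R us + x)"
    by simp
  then have "h * F ((1 + s) *\<^sub>R us + x) + h * ((s' - s) * inner (gv ((1 + s) *\<^sub>R us + x)) us) \<le> h * F ((1 + s') *\<^sub>R us + x)"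
    using h_pos by (simp add: distrib_left[symmetric])
  then show ?thesis by (simp add: psi_def Dp_def algebra_simps)
qed

lemma psi_cont_x: "continuous (at x) (\<lambda>x. psi x s)"
  unfolding psi_def
  by (intro continuous_intros continuous_at_compose[OF _ F_cont[of _ UNIV], unfolded o_def])

lemma psi_cont_s: "continuous (at s) (\<lambda>s. psi x s)"
  unfolding psi_def
  by (intro continuous_intros continuous_at_compose[OF _ F_cont[of _ UNIV], unfolded o_def])

lemma gg_scale: "c \<ge> 0 \<Longrightarrow> gg p (c * t) = c powr (p+1) * gg p t"
  by (simp add: gg_def abs_mult powr_mult)

lemma psi_0: "s > -1 \<Longrightarrow> psi 0 s = (1 + s) powr (p+1) - 1"
proof -
  assume s: "s > -1"
  have "F ((1 + s) *\<^sub>R us) = (1 + s) powr (p+1) * F us"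
    using s by (simp add: F_def gg_scale sum_distrib_left)
  then show ?thesis using hF_us by (simp add: psi_def mult.left_commute)
qed

definition R0 where "R0 = 2 * norm us + 2"
definition eps where "eps = min (1/2) ((p+1) / (2 * h * (KR R0 * (norm us)^2 + 1)))"

lemma eps_pos: "eps > 0" and eps_half: "eps \<le> 1/2"
proof -
  have "KR R0 * (norm us)^2 \<ge> 0" using KR_nonneg by simp
  then show "eps > 0" using h_pos p1 by (simp add: eps_def)
  show "eps \<le> 1/2" unfolding eps_def by (rule min.cobounded1)
qed

lemma psi_0_signs: "psi 0 eps > 0" "psi 0 (-eps) < 0"
proof -
  show "psi 0 eps > 0" using eps_pos eps_half p1 by (simp add: psi_0)
  have "(1 - eps) powr (p+1) < 1 powr (p+1)"
    using eps_pos eps_half p1 by (intro powr_less_mono2) auto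
  then show "psi 0 (-eps) < 0" using eps_pos eps_half by (simp add: psi_0)
qed

lemma exists_rho: "\<exists>\<rho>>0. \<rho> \<le> 1/2 \<and> (\<forall>x. norm x < \<rho> \<longrightarrow> psi x eps > 0 \<and> psi x (-eps) < 0)"
proof -
  obtain d1 where d1: "d1 > 0" "\<And>x. dist x 0 < d1 \<Longrightarrow> dist (psi x eps) (psi 0 eps) < psi 0 eps"
    using psi_cont_x[of 0 eps, unfolded continuous_at_eps_delta] psi_0_signs by blast
  obtain d2 where d2: "d2 > 0" "\<And>x. dist x 0 < d2 \<Longrightarrow> dist (psi x (-eps)) (psi 0 (-eps)) < - psi 0 (-eps)"
    using psi_cont_x[of 0 "-eps", unfolded continuous_at_eps_delta] psi_0_signs by (meson neg_0_less_iff_less)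
  show ?thesis
  proof (intro exI[of _ "min (1/2) (min d1 d2)"] conjI allI impI)
    fix x :: "'m grid" assume "norm x < min (1/2) (min d1 d2)"
    then have "dist x 0 < d1" "dist x 0 < d2" by auto
    then show "psi x eps > 0" "psi x (-eps) < 0"
      using d1(2) d2(2) by (auto simp: dist_real_def abs_less_iff)
  qed (use d1 d2 in auto)
qed

definition rho where "rho = (SOME \<rho>. \<rho> > 0 \<and> \<rho> \<le> 1/2 \<and> (\<forall>x. norm x < \<rho> \<longrightarrow> psi x eps > 0 \<and> psi x (-eps) < 0))"

lemma rho: "rho > 0" "rho \<le> 1/2" "\<And>x. norm x < rho \<Longrightarrow> psi x eps > 0 \<and> psi x (-eps) < 0"
  using someI_ex[OF exists_rho] unfolding rho_def[symmetric] by blast+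

definition W :: "'m grid set" where "W = ball 0 rho"

lemma W_open: "open W" and W_0: "0 \<in> W"
  using rho by (auto simp: W_def)

lemma W_signs: "x \<in> W \<Longrightarrow> psi x eps > 0 \<and> psi x (-eps) < 0"
  using rho(3) by (simp add: W_def)

lemma sign_struct:
  assumes x: "x \<in> W" and s1: "\<bar>s1\<bar> < eps" and z: "psi x s1 = 0"
  shows "Dp x s1 > 0" "\<And>s. s1 < s \<Longrightarrow> psi x s > 0" "\<And>s. - eps \<le> s \<Longrightarrow> s < s1 \<Longrightarrow> psi x s < 0"
proof -
  have neg: "psi x (-eps) < 0" using W_signs[OF x] by blast
  have "psi x s1 + Dp x s1 * (- eps - s1) \<le> psi x (-eps)" by (rule psi_tangent)
  then have "Dp x s1 * (s1 + eps) > 0" using neg z by (simp add: algebra_simps)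
  moreover have "s1 + eps > 0" using s1 by auto
  ultimately show D: "Dp x s1 > 0" by (simp add: zero_less_mult_iff)
  show "psi x s > 0" if "s1 < s" for s
  proof -
    have "psi x s1 + Dp x s1 * (s - s1) \<le> psi x s" by (rule psi_tangent)
    moreover have "Dp x s1 * (s - s1) > 0" using D that by simp
    ultimately show ?thesis using z by linarith
  qed
  show "psi x s < 0" if "- eps \<le> s" "s < s1" for s
  proof (rule ccontr)
    assume "\<not> psi x s < 0"
    then have ps: "psi x s \<ge> 0" by simp
    have t1: "psi x s + Dp x s * (s1 - s) \<le> psi x s1" by (rule psi_tangent)
    have t2: "psi x s + Dp x s * (- eps - s) \<le> psi x (-eps)" by (rule psi_tangent)
    from t1 z ps have "Dp x s * (s1 - s) \<le> 0" by linarith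
    then have "Dp x s \<le> 0" using that by (simp add: mult_le_0_iff)
    then have "Dp x s * (- eps - s) \<ge> 0" using that by (simp add: mult_nonpos_nonpos)
    then show False using t2 ps neg by linarith
  qed
qed

lemma root_unique:
  assumes "x \<in> W" "\<bar>s1\<bar> < eps" "\<bar>s2\<bar> < eps" "psi x s1 = 0" "psi x s2 = 0"
  shows "s1 = s2"
proof (rule ccontr)
  assume "s1 \<noteq> s2"
  then consider "s1 < s2" | "s2 < s1" by linarith
  then show False
  proof cases
    case 1 then show ?thesis using sign_struct(2)[OF assms(1,2,4) 1] assms(5) by simp
  next
    case 2 then show ?thesis using sign_struct(2)[OF assms(1,3,5) 2] assms(4) by simp
  qed
qed

lemma root_between:
  assumes x: "x \<in> W" and ab: "- eps \<le> a" "a < b" "b \<le> eps" and sg: "psi x a < 0" "psi x b > 0"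
  shows "\<exists>s. a < s \<and> s < b \<and> psi x s = 0"
proof -
  have "\<exists>s. a \<le> s \<and> s \<le> b \<and> psi x s = 0"
    using sg ab by (intro IVT[of "\<lambda>s. psi x s"]) (auto intro: psi_cont_s)
  then obtain s where "a \<le> s" "s \<le> b" "psi x s = 0" by blast
  moreover have "s \<noteq> a" "s \<noteq> b" using sg \<open>psi x s = 0\<close> by auto
  ultimately show ?thesis by force
qed

definition rr :: "'m grid \<Rightarrow> real" where "rr x = (THE s. \<bar>s\<bar> < eps \<and> psi x s = 0)"

lemma rr_prop: assumes "x \<in> W" shows "\<bar>rr x\<bar> < eps" "psi x (rr x) = 0"
proof -
  have "\<exists>s. - eps < s \<and> s < eps \<and> psi x s = 0"
    using root_between[OF assms, of "-eps" eps] W_signs[OF assms] eps_pos by auto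
  then obtain s where s: "\<bar>s\<bar> < eps" "psi x s = 0" by (force simp: abs_less_iff)
  have "\<bar>rr x\<bar> < eps \<and> psi x (rr x) = 0"
    unfolding rr_def by (rule theI[of _ s]) (use s root_unique[OF assms] in auto)
  then show "\<bar>rr x\<bar> < eps" "psi x (rr x) = 0" by auto
qed

lemma rr_unique: "x \<in> W \<Longrightarrow> \<bar>s\<bar> < eps \<Longrightarrow> psi x s = 0 \<longleftrightarrow> s = rr x"
  using rr_prop root_unique by blast

lemma rr_0: "rr 0 = 0"
proof -
  have "psi 0 0 = 0" using psi_0[of 0] by simp
  then show ?thesis using rr_unique[OF W_0, of 0] eps_pos by simp
qed

lemma rr_cont: assumes x: "x \<in> W" shows "continuous (at x) rr"
  unfolding continuous_at_eps_delta
proof (intro allI impI)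
  fix e :: real assume e: "e > 0"
  define s0 where "s0 = rr x"
  define \<eta> where "\<eta> = min (e/2) ((eps - \<bar>s0\<bar>) / 2)"
  have s0: "\<bar>s0\<bar> < eps" "psi x s0 = 0" using rr_prop[OF x] by (auto simp: s0_def)
  have \<eta>: "\<eta> > 0" "\<eta> < e" using e s0 by (auto simp: \<eta>_def)
  have "\<eta> \<le> (eps - \<bar>s0\<bar>) / 2" unfolding \<eta>_def by (rule min.cobounded2)
  then have et: "2 * \<eta> \<le> eps - \<bar>s0\<bar>" by simp
  have ab1: "- eps < s0 - \<eta>" using et s0 abs_ge_minus_self[of s0] abs_ge_self[of s0] by linarith
  have ab2: "s0 + \<eta> < eps" using et s0 abs_ge_minus_self[of s0] abs_ge_self[of s0] by linarith
  note ab = ab1 ab2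
  have sa: "psi x (s0 - \<eta>) < 0" using sign_struct(3)[OF x s0(1) s0(2), of "s0 - \<eta>"] ab \<eta> by auto
  have sb: "psi x (s0 + \<eta>) > 0" using sign_struct(2)[OF x s0(1) s0(2), of "s0 + \<eta>"] \<eta> by auto
  obtain d1 where d1: "d1 > 0" "\<And>y. dist y x < d1 \<Longrightarrow> dist (psi y (s0 - \<eta>)) (psi x (s0 - \<eta>)) < - psi x (s0 - \<eta>)"
    using psi_cont_x[of x "s0 - \<eta>", unfolded continuous_at_eps_delta] sa by (meson neg_0_less_iff_less)
  obtain d2 where d2: "d2 > 0" "\<And>y. dist y x < d2 \<Longrightarrow> dist (psi y (s0 + \<eta>)) (psi x (s0 + \<eta>)) < psi x (s0 + \<eta>)"
    using psi_cont_x[of x "s0 + \<eta>", unfolded continuous_at_eps_delta] sb by blast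
  obtain d3 where d3: "d3 > 0" "ball x d3 \<subseteq> W" using W_open x open_contains_ball by blast
  show "\<exists>d>0. \<forall>y. dist y x < d \<longrightarrow> dist (rr y) (rr x) < e"
  proof (intro exI[of _ "min d1 (min d2 d3)"] conjI allI impI)
    show "min d1 (min d2 d3) > 0" using d1 d2 d3 by simp
    fix y assume y: "dist y x < min d1 (min d2 d3)"
    have yW: "y \<in> W" using y d3(2) by (auto simp: dist_commute)
    have "psi y (s0 - \<eta>) < 0" using d1(2)[of y] y by (auto simp: dist_real_def)
    moreover have "psi y (s0 + \<eta>) > 0" using d2(2)[of y] y by (auto simp: dist_real_def)
    ultimately obtain s where s: "s0 - \<eta> < s" "s < s0 + \<eta>" "psi y s = 0"
      using root_between[OF yW less_imp_le[OF ab(1)] _ less_imp_le[OF ab(2)]] \<eta> by force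
    have "\<bar>s\<bar> < eps" using s ab by auto
    then have "s = rr y" using rr_unique[OF yW] s by blast
    then show "dist (rr y) (rr x) < e" using s \<eta> by (auto simp: dist_real_def s0_def)
  qed
qed

end

context gsl begin

definition vv :: "'m grid \<Rightarrow> 'm grid" where "vv x = (1 + rr x) *\<^sub>R us + x"
definition B :: "'m grid \<Rightarrow> real" where "B x = (\<Sum>i\<in>UNIV. g1 p (vv x $ i) * us $ i)"
definition cc :: "'m bit0 \<Rightarrow> 'm grid \<Rightarrow> real" where "cc j x = - g1 p (vv x $ j) / B x"
definition rp :: "'m grid \<Rightarrow> 'm grid \<Rightarrow> real" where "rp x l = (\<Sum>j\<in>UNIV. cc j x * l $ j)"
definition DB :: "'m grid \<Rightarrow> 'm grid \<Rightarrow> real" where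
  "DB x l = (\<Sum>i\<in>UNIV. (rp x l * us $ i + l $ i) * g2 p (vv x $ i) * us $ i)"
definition Dc :: "'m bit0 \<Rightarrow> 'm grid \<Rightarrow> 'm grid \<Rightarrow> real" where
  "Dc j x l = ((rp x l * us $ j + l $ j) * g2 p (vv x $ j) * B x - g1 p (vv x $ j) * DB x l) / (B x * B x) * (-1)"

lemma B_eq: "Dp x (rr x) = h * B x"
  by (simp add: Dp_def B_def vv_def inner_vec_def gv_def)

lemma B_pos: "x \<in> W \<Longrightarrow> B x > 0"
  using sign_struct(1)[OF _ rr_prop(1) rr_prop(2)] B_eq h_pos by (metis zero_less_mult_iff less_asym)

lemma psi_pair_deriv:
  "((\<lambda>z. psi (fst z) (snd z)) has_derivative
     (\<lambda>z'. h * inner (gv ((1 + s) *\<^sub>R us + x)) (fst z') + (h * inner (gv ((1 + s) *\<^sub>R us + x)) us) * snd z')) (at (x, s))"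
proof -
  have g: "((\<lambda>z::'m grid \<times> real. (1 + snd z) *\<^sub>R us + fst z) has_derivative (\<lambda>z'. snd z' *\<^sub>R us + fst z')) (at (x, s))"
    by (auto intro!: derivative_eq_intros)
  have "((\<lambda>z. F ((1 + snd z) *\<^sub>R us + fst z)) has_derivative
      (\<lambda>z'. inner (gv ((1 + s) *\<^sub>R us + x)) (snd z' *\<^sub>R us + fst z'))) (at (x, s))"
    using has_derivative_compose[OF g F_deriv[of _ UNIV]] by simp
  then have "((\<lambda>z. h * F ((1 + snd z) *\<^sub>R us + fst z) - 1) has_derivative
      (\<lambda>z'. h * inner (gv ((1 + s) *\<^sub>R us + x)) (snd z' *\<^sub>R us + fst z'))) (at (x, s))"
    by (auto intro!: derivative_eq_intros)
  then show ?thesis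
    unfolding psi_def by (simp add: inner_add_right algebra_simps)
qed

lemma rr_deriv: assumes x: "x \<in> W" shows "(rr has_derivative rp x) (at x)"
proof -
  let ?A = "\<lambda>k. h * inner (gv (vv x)) k"
  let ?b = "h * inner (gv (vv x)) us"
  have "(rr has_derivative (\<lambda>k. - ?A k / ?b)) (at x)"
  proof (rule ift_deriv[where H="\<lambda>z. psi (fst z) (snd z)"])
    show "((\<lambda>z. psi (fst z) (snd z)) has_derivative (\<lambda>z. ?A (fst z) + ?b * snd z)) (at (x, rr x))"
      using psi_pair_deriv[of "rr x" x] by (simp add: vv_def)
    show "bounded_linear ?A" by (intro bounded_linear_intros)
    show "?b \<noteq> 0" using B_pos[OF x] B_eq Dp_def h_pos by (simp add: vv_def)
    show "continuous (at x) rr" by (rule rr_cont[OF x])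
    have "\<forall>\<^sub>F y in at x. y \<in> W" using W_open x by (simp add: eventually_at_topological) blast
    then show "\<forall>\<^sub>F y in at x. psi (fst (y, rr y)) (snd (y, rr y)) = 0"
      by eventually_elim (simp add: rr_prop)
    show "psi (fst (x, rr x)) (snd (x, rr x)) = 0" using rr_prop[OF x] by simp
  qed
  moreover have "(\<lambda>k. - ?A k / ?b) = rp x"
  proof
    fix k
    have "?b = h * B x" by (simp add: B_def inner_vec_def gv_def)
    then show "- ?A k / ?b = rp x k"
      using h_pos by (simp add: rp_def cc_def inner_vec_def gv_def sum_divide_distrib sum_negf mult.commute)
  qed
  ultimately show ?thesis by simp
qed

lemma vvj_deriv: assumes x: "x \<in> W"
  shows "((\<lambda>x. vv x $ j) has_derivative (\<lambda>l. rp x l * us $ j + l $ j)) (at x)"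
proof -
  have "((\<lambda>x. (1 + rr x) * us $ j + x $ j) has_derivative (\<lambda>l. rp x l * us $ j + l $ j)) (at x)"
    using rr_deriv[OF x] bounded_linear_imp_has_derivative[OF bounded_linear_vec_nth[of j]]
    by (auto intro!: derivative_eq_intros)
  then show ?thesis by (simp add: vv_def)
qed

lemma g1v_deriv: assumes x: "x \<in> W"
  shows "((\<lambda>x. g1 p (vv x $ j)) has_derivative (\<lambda>l. (rp x l * us $ j + l $ j) * g2 p (vv x $ j))) (at x)"
  by (rule DERIV_compose_FDERIV[OF g1_deriv[OF p1] vvj_deriv[OF x]])

lemma B_deriv: assumes x: "x \<in> W" shows "(B has_derivative DB x) (at x)"
proof -
  have "((\<lambda>x. \<Sum>i\<in>UNIV. g1 p (vv x $ i) * us $ i) has_derivative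
      (\<lambda>l. \<Sum>i\<in>UNIV. (rp x l * us $ i + l $ i) * g2 p (vv x $ i) * us $ i)) (at x)"
    by (intro has_derivative_sum has_derivative_mult_left g1v_deriv[OF x])
  then show ?thesis unfolding B_def[abs_def] DB_def[abs_def] by simp
qed

lemma cc_deriv: assumes x: "x \<in> W" shows "(cc j has_derivative Dc j x) (at x)"
proof -
  have "((\<lambda>x. g1 p (vv x $ j) / B x) has_derivative
     (\<lambda>l. ((rp x l * us $ j + l $ j) * g2 p (vv x $ j) * B x - g1 p (vv x $ j) * DB x l) / (B x * B x))) (at x)"
    using B_pos[OF x] by (intro has_derivative_divide' g1v_deriv[OF x] B_deriv[OF x]) auto
  then have "((\<lambda>x. g1 p (vv x $ j) / B x * (-1)) has_derivative Dc j x) (at x)"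
    unfolding Dc_def[abs_def] by (intro has_derivative_mult_left)
  then show ?thesis unfolding cc_def[abs_def] by simp
qed

end

context gsl begin

definition E :: "'m bit0 \<Rightarrow> ('m grid \<Rightarrow>\<^sub>L real)" where "E j = blinfun_inner_left (axis j 1)"
definition f1 :: "'m grid \<Rightarrow> ('m grid \<Rightarrow>\<^sub>L real)" where "f1 x = (\<Sum>j\<in>UNIV. cc j x *\<^sub>R E j)"
definition f2 :: "'m grid \<Rightarrow> ('m grid \<Rightarrow>\<^sub>L ('m grid \<Rightarrow>\<^sub>L real))" where
  "f2 x = Blinfun (\<lambda>l. \<Sum>j\<in>UNIV. Dc j x l *\<^sub>R E j)"

lemma E_apply: "blinfun_apply (E j) k = k $ j"
  by (simp add: E_def inner_axis)

lemma f1_apply: "blinfun_apply (f1 x) = rp x"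
  by (simp add: fun_eq_iff f1_def rp_def blinfun.sum_left blinfun.scaleR_left E_apply)

lemma f2_apply: assumes x: "x \<in> W" shows "blinfun_apply (f2 x) = (\<lambda>l. \<Sum>j\<in>UNIV. Dc j x l *\<^sub>R E j)"
proof -
  have "bounded_linear (\<lambda>l. \<Sum>j\<in>UNIV. Dc j x l *\<^sub>R E j)"
  proof (rule bounded_linear_sum)
    fix j :: "'m bit0"
    have "bounded_linear (Dc j x)" using cc_deriv[OF x] has_derivative_bounded_linear by blast
    then show "bounded_linear (\<lambda>l. Dc j x l *\<^sub>R E j)"
      using bounded_linear_compose[OF bounded_linear_scaleR_left] by blast
  qed
  then show ?thesis unfolding f2_def by (rule bounded_linear_Blinfun_apply)
qed

lemma f1_deriv: assumes x: "x \<in> W" shows "(f1 has_derivative blinfun_apply (f2 x)) (at x)"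
proof -
  have "((\<lambda>x. \<Sum>j\<in>UNIV. cc j x *\<^sub>R E j) has_derivative (\<lambda>l. \<Sum>j\<in>UNIV. Dc j x l *\<^sub>R E j)) (at x)"
    by (intro has_derivative_sum has_derivative_scaleR_left cc_deriv[OF x])
  then show ?thesis unfolding f2_apply[OF x] f1_def[abs_def] .
qed

lemma rr_deriv': assumes x: "x \<in> W" shows "(rr has_derivative blinfun_apply (f1 x)) (at x)"
  unfolding f1_apply by (rule rr_deriv[OF x])

lemma cont_rr: "continuous_on W rr"
  using rr_cont by (simp add: continuous_at_imp_continuous_on)

lemma cont_vvj: "continuous_on W (\<lambda>x. vv x $ j)"
  unfolding vv_def by (intro continuous_intros cont_rr)

lemma cont_g1v: "continuous_on W (\<lambda>x. g1 p (vv x $ j))"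
  by (rule continuous_on_compose2[OF g1_cont[OF p1, of UNIV] cont_vvj]) auto

lemma cont_g2v: "continuous_on W (\<lambda>x. g2 p (vv x $ j))"
  by (rule continuous_on_compose2[OF g2_cont[OF p1, of UNIV] cont_vvj]) auto

lemma B_nz: "x \<in> W \<Longrightarrow> B x \<noteq> 0"
  using B_pos[of x] by linarith

lemma cont_B: "continuous_on W B"
  unfolding B_def[abs_def] by (intro continuous_intros cont_g1v)

lemma cont_cc: "continuous_on W (cc j)"
  unfolding cc_def[abs_def] by (intro continuous_intros cont_g1v cont_B) (auto simp: B_nz)

lemma cont_rp: "continuous_on W (\<lambda>x. rp x l)"
  unfolding rp_def by (intro continuous_intros cont_cc)

lemma cont_DB: "continuous_on W (\<lambda>x. DB x l)"
  unfolding DB_def by (intro continuous_intros cont_rp cont_g2v)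

lemma cont_Dc: "continuous_on W (\<lambda>x. Dc j x l)"
  unfolding Dc_def
  by (intro continuous_intros cont_rp cont_g2v cont_g1v cont_B cont_DB) (auto simp: B_nz)

lemma cont_f2: "continuous_on W f2"
proof (rule continuous_on_blinfun_componentwise)
  fix i :: "'m grid"
  have "continuous_on W (\<lambda>x. \<Sum>j\<in>UNIV. Dc j x i *\<^sub>R E j)"
    by (intro continuous_intros cont_Dc)
  moreover have "continuous_on W (\<lambda>x. blinfun_apply (f2 x) i) = continuous_on W (\<lambda>x. \<Sum>j\<in>UNIV. Dc j x i *\<^sub>R E j)"
    by (rule continuous_on_cong) (simp_all add: f2_apply)
  ultimately show "continuous_on W (\<lambda>x. blinfun_apply (f2 x) i)" by simp
qed

lemma C2_rr: "C2_on W rr"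
  unfolding C2_on_def
  by (rule exI[of _ f1], rule exI[of _ f2]) (intro conjI ballI rr_deriv' f1_deriv cont_f2)

end

context gsl begin

lemma N_bound:
  fixes e :: "'m grid"
  assumes "norm1_h x0 L e \<le> \<delta>"
  shows "norm e \<le> \<delta> / sqrt h"
proof -
  have d: "\<delta> \<ge> 0" using assms norm1_nonneg[of e] by linarith
  have "h * (norm e)^2 \<le> \<delta>^2"
    using norm1_lower[of e] power_mono[OF assms norm1_nonneg[of e], of 2] by linarith
  then have "(norm e)^2 \<le> \<delta>^2 / h" using h_pos by (simp add: field_simps mult.commute)
  then have "sqrt ((norm e)^2) \<le> sqrt (\<delta>^2 / h)" by (rule real_sqrt_le_mono)
  then show ?thesis using d h_pos by (simp add: real_sqrt_divide)
qed

definition a1 where "a1 = h / (p+1) * norm bv"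

lemma a1_nonneg: "a1 \<ge> 0" using h_pos p1 by (simp add: a1_def)

lemma s_formula:
  fixes e \<xi> :: "'m grid"
  assumes "inner bv \<xi> = 0" "e = s *\<^sub>R us + \<xi>"
  shows "s = h / (p+1) * inner bv e"
  using assms inner_bv_us h_pos p1 by (simp add: inner_add_right)

lemma decomp_bound:
  fixes u \<xi> :: "'m grid"
  assumes t: "inner bv \<xi> = 0" and u: "u = (1 + s) *\<^sub>R us + \<xi>"
  shows "\<bar>s\<bar> \<le> a1 * norm (u - us)" "norm \<xi> \<le> (1 + a1 * norm us) * norm (u - us)"
proof -
  have e: "u - us = s *\<^sub>R us + \<xi>" using u by (simp add: algebra_simps)
  have s: "s = h / (p+1) * inner bv (u - us)" by (rule s_formula[OF t e])
  have "\<bar>inner bv (u - us)\<bar> \<le> norm bv * norm (u - us)" by (rule Cauchy_Schwarz_ineq2)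
  then show sb: "\<bar>s\<bar> \<le> a1 * norm (u - us)"
  proof -
    have "\<bar>s\<bar> = h / (p+1) * \<bar>inner bv (u - us)\<bar>" unfolding s using h_pos p1 by (simp add: abs_mult)
    also have "\<dots> \<le> h / (p+1) * (norm bv * norm (u - us))"
      using \<open>\<bar>inner bv (u - us)\<bar> \<le> norm bv * norm (u - us)\<close> h_pos p1 by (intro mult_left_mono) auto
    finally show ?thesis by (simp add: a1_def mult.assoc)
  qed
  have "\<xi> = (u - us) - s *\<^sub>R us" using e by simp
  then have "norm \<xi> \<le> norm (u - us) + \<bar>s\<bar> * norm us"
    by (metis norm_scaleR norm_triangle_ineq4 real_norm_def)
  also have "\<dots> \<le> norm (u - us) + a1 * norm (u - us) * norm us"
    using sb by (intro add_left_mono mult_right_mono) auto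
  finally show "norm \<xi> \<le> (1 + a1 * norm us) * norm (u - us)" by (simp add: algebra_simps)
qed

definition TT where "TT = min eps rho / (1 + a1 + a1 * norm us)"
definition delta1 where "delta1 = sqrt h * TT / 2"

lemma TT_pos: "TT > 0"
  using eps_pos rho(1) a1_nonneg by (simp add: TT_def add_pos_nonneg)

lemma delta1_pos: "delta1 > 0" using TT_pos h_pos by (simp add: delta1_def)

lemma U_clause:
  fixes u \<xi> :: "'m grid"
  assumes "u \<in> U_h x0 L delta1 us" "\<xi> \<in> tangent_h L p us" "u = (1 + s) *\<^sub>R us + \<xi>"
  shows "\<xi> \<in> W \<and> \<bar>s\<bar> < eps"
proof -
  have t: "inner bv \<xi> = 0" using assms(2) tangent_iff by blast
  have "norm (u - us) \<le> delta1 / sqrt h" using assms(1) N_bound by (simp add: U_h_def)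
  also have "\<dots> = TT / 2" using h_pos by (simp add: delta1_def)
  finally have N: "norm (u - us) \<le> TT / 2" .
  have den: "1 + a1 + a1 * norm us > 0" using a1_nonneg by (simp add: add_pos_nonneg)
  have TTe: "TT * (1 + a1 + a1 * norm us) = min eps rho" using den by (simp add: TT_def)
  have "\<bar>s\<bar> \<le> a1 * norm (u - us)" by (rule decomp_bound(1)[OF t assms(3)])
  also have "\<dots> \<le> (1 + a1 + a1 * norm us) * (TT / 2)"
    using N a1_nonneg by (intro mult_mono) (auto simp: add_nonneg_nonneg)
  also have "\<dots> = min eps rho / 2" using TTe by (simp add: mult.commute)
  also have "\<dots> < min eps rho"
  proof -
    have m: "min eps rho > 0" using eps_pos rho(1) by simp
    show ?thesis using half_gt_zero[OF m] field_sum_of_halves[of "min eps rho"] by linarith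
  qed
  finally have s: "\<bar>s\<bar> < eps" by simp
  have "norm \<xi> \<le> (1 + a1 * norm us) * norm (u - us)" by (rule decomp_bound(2)[OF t assms(3)])
  also have "\<dots> \<le> (1 + a1 + a1 * norm us) * (TT / 2)"
    using N a1_nonneg by (intro mult_mono) (auto simp: add_nonneg_nonneg)
  also have "\<dots> = min eps rho / 2" using TTe by (simp add: mult.commute)
  also have "\<dots> < min eps rho"
  proof -
    have m: "min eps rho > 0" using eps_pos rho(1) by simp
    show ?thesis using half_gt_zero[OF m] field_sum_of_halves[of "min eps rho"] by linarith
  qed
  finally have "norm \<xi> < rho" by simp
  then show ?thesis using s by (simp add: W_def)
qed

lemma root_clause:
  fixes \<xi> :: "'m grid"
  assumes "\<xi> \<in> W" "\<bar>s\<bar> < eps"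
  shows "normq_h L (p + 1) ((1 + s) *\<^sub>R us + \<xi>) = 1 \<longleftrightarrow> s = rr \<xi>"
proof -
  have "normq_h L (p + 1) ((1 + s) *\<^sub>R us + \<xi>) = 1 \<longleftrightarrow> psi \<xi> s = 0"
    unfolding normq_one psi_def by simp
  then show ?thesis using rr_unique[OF assms] by simp
qed

definition C1i where "C1i = 2 * h * KR R0 / (p+1) * Cq1 + Cq2^2 / h"

lemma C1i_nonneg: "C1i \<ge> 0"
  using h_pos p1 KR_nonneg Cq_pos by (simp add: C1i_def)

lemma normq_norm1:
  fixes \<xi> :: "'m grid"
  shows "(normq_h L (p + 1) \<xi>)^2 \<le> C1i * (norm1_h x0 L \<xi>)^2"
proof -
  have nq: "normq_h L (p+1) \<xi> \<ge> 0" by (simp add: normq_h_def)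
  have "(normq_h L (p + 1) \<xi>)^2 \<le> (Cq2 * norm \<xi>)^2"
    using normq_le_norm[of \<xi>] nq by (intro power_mono) auto
  also have "\<dots> = Cq2^2 / h * (h * (norm \<xi>)^2)" using h_pos by (simp add: power_mult_distrib)
  also have "\<dots> \<le> Cq2^2 / h * (norm1_h x0 L \<xi>)^2"
    using norm1_lower[of \<xi>] h_pos by (intro mult_left_mono) auto
  also have "\<dots> \<le> C1i * (norm1_h x0 L \<xi>)^2"
  proof -
    have "2 * h * KR R0 / (p+1) * Cq1 \<ge> 0" using h_pos p1 KR_nonneg Cq_pos by simp
    then show ?thesis unfolding C1i_def by (intro mult_right_mono) auto
  qed
  finally show ?thesis .
qed

lemma r_quad:
  fixes \<xi> :: "'m grid"
  assumes W: "\<xi> \<in> W" and t: "\<xi> \<in> tangent_h L p us"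
  shows "\<bar>rr \<xi>\<bar> \<le> C1i * (normq_h L (p + 1) \<xi>)^2"
proof -
  define s where "s = rr \<xi>"
  define w where "w = (1 + s) *\<^sub>R us + \<xi>"
  define K where "K = KR R0"
  have tb: "inner bv \<xi> = 0" using t tangent_iff by blast
  have s: "\<bar>s\<bar> < eps" "psi \<xi> s = 0" using rr_prop[OF W] by (auto simp: s_def)
  have hFw: "h * F w = 1" using s(2) by (simp add: psi_def w_def)
  have e: "w - us = s *\<^sub>R us + \<xi>" by (simp add: w_def algebra_simps)
  have ie: "inner (gv us) (w - us) = s * ((p+1) / h)"
    using tb inner_bv_us by (simp add: e bv_def[symmetric] inner_add_right)
  have nx: "norm \<xi> < 1/2" using W rho(2) by (simp add: W_def)
  have sh: "\<bar>s\<bar> \<le> 1/2" using s(1) eps_half by simp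
  have nw: "norm w \<le> R0"
  proof -
    have "norm w \<le> \<bar>1 + s\<bar> * norm us + norm \<xi>" unfolding w_def
      by (metis norm_scaleR norm_triangle_ineq real_norm_def)
    also have "\<dots> \<le> 2 * norm us + 1"
      using sh nx by (intro add_mono mult_right_mono) auto
    finally show ?thesis by (simp add: R0_def)
  qed
  have nus: "norm us \<le> R0" by (simp add: R0_def)
  have low: "F us + s * ((p+1) / h) \<le> F w" using F_lower[of us w] ie by simp
  have up: "F w \<le> F us + s * ((p+1) / h) + K / 2 * (norm (w - us))^2"
    using F_upper[OF nus nw] ie by (simp add: K_def)
  have Fe: "F w = F us" using hFw hF_us h_pos by (metis mult_left_cancel order_less_irrefl)
  have sneg: "s \<le> 0"
  proof -
    have "s * ((p+1) / h) \<le> 0" using low Fe by linarith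
    moreover have "(p+1) / h > 0" using h_pos p1 by simp
    ultimately show ?thesis using mult_pos_pos[of s "(p+1)/h"] by linarith
  qed
  have ne: "(norm (w - us))^2 \<le> 2 * (s^2 * (norm us)^2) + 2 * (norm \<xi>)^2"
  proof -
    have "norm (w - us) \<le> \<bar>s\<bar> * norm us + norm \<xi>" unfolding e
      by (metis norm_scaleR norm_triangle_ineq real_norm_def)
    then have "(norm (w - us))^2 \<le> (\<bar>s\<bar> * norm us + norm \<xi>)^2" by (intro power_mono) auto
    also have "\<dots> \<le> 2 * (s^2 * (norm us)^2) + 2 * (norm \<xi>)^2"
    proof -
      have id: "\<And>a b::real. (a + b)^2 + (a - b)^2 = 2 * a^2 + 2 * b^2" by (simp add: power2_eq_square algebra_simps)
      have "(\<bar>s\<bar> * norm us + norm \<xi>)^2 \<le> 2 * (\<bar>s\<bar> * norm us)^2 + 2 * (norm \<xi>)^2"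
        using id[of "\<bar>s\<bar> * norm us" "norm \<xi>"] zero_le_power2[of "\<bar>s\<bar> * norm us - norm \<xi>"] by linarith
      then show ?thesis by (simp add: power_mult_distrib)
    qed
    finally show ?thesis .
  qed
  have K0: "K \<ge> 0" using KR_nonneg by (simp add: K_def)
  have main: "- s * ((p+1) / h) \<le> K * (s^2 * (norm us)^2) + K * (norm \<xi>)^2"
  proof -
    have "0 \<le> s * ((p+1) / h) + K / 2 * (norm (w - us))^2" using up Fe by linarith
    moreover have "K / 2 * (norm (w - us))^2 \<le> K / 2 * (2 * (s^2 * (norm us)^2) + 2 * (norm \<xi>)^2)"
      using ne K0 by (intro mult_left_mono) auto
    moreover have "K / 2 * (2 * (s^2 * (norm us)^2) + 2 * (norm \<xi>)^2) = K * (s^2 * (norm us)^2) + K * (norm \<xi>)^2"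
      by (simp add: algebra_simps)
    moreover have "- s * ((p+1) / h) = - (s * ((p+1) / h))" by simp
    ultimately show ?thesis by linarith
  qed
  have epsb: "eps * (2 * h * (K * (norm us)^2 + 1)) \<le> p + 1"
  proof -
    have pos: "2 * h * (K * (norm us)^2 + 1) > 0" using h_pos K0 by (simp add: add_nonneg_pos)
    have "eps \<le> (p+1) / (2 * h * (K * (norm us)^2 + 1))" unfolding eps_def K_def by (rule min.cobounded2)
    then show ?thesis using pos by (simp add: pos_le_divide_eq)
  qed
  have "K * (s^2 * (norm us)^2) \<le> K * (norm us)^2 * eps * \<bar>s\<bar>"
  proof -
    have "\<bar>s\<bar> * \<bar>s\<bar> \<le> eps * \<bar>s\<bar>" using s(1) by (intro mult_right_mono) auto
    then have "s^2 \<le> eps * \<bar>s\<bar>" by (simp add: power2_eq_square abs_mult[symmetric])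
    then have "s^2 * (norm us)^2 \<le> eps * \<bar>s\<bar> * (norm us)^2" by (intro mult_right_mono) auto
    then have "K * (s^2 * (norm us)^2) \<le> K * (eps * \<bar>s\<bar> * (norm us)^2)" using K0 by (intro mult_left_mono) auto
    then show ?thesis by (simp add: mult_ac)
  qed
  also have "\<dots> \<le> (p+1) / (2 * h) * \<bar>s\<bar>"
  proof -
    have "K * (norm us)^2 * eps \<le> (p+1) / (2*h)"
    proof -
      have "eps * (2 * h) * (K * (norm us)^2) \<le> p + 1"
      proof -
        have "0 < h * eps" using eps_pos h_pos by simp
        moreover have "eps * (2 * h * (K * (norm us)^2 + 1)) = eps * (2 * h) * (K * (norm us)^2) + 2 * (h * eps)"
          by (simp add: algebra_simps)
        ultimately show ?thesis using epsb by linarith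
      qed
      then show ?thesis using h_pos by (simp add: field_simps)
    qed
    then show ?thesis by (intro mult_right_mono) auto
  qed
  finally have "\<bar>s\<bar> * ((p+1) / h) \<le> (p+1) / (2 * h) * \<bar>s\<bar> + K * (norm \<xi>)^2"
    using main sneg by simp
  then have "\<bar>s\<bar> * ((p+1) / (2*h)) \<le> K * (norm \<xi>)^2"
    by (simp add: field_simps)
  then have "\<bar>s\<bar> \<le> 2 * h * K / (p+1) * (norm \<xi>)^2"
    using h_pos p1 by (simp add: field_simps)
  also have "\<dots> \<le> 2 * h * K / (p+1) * (Cq1 * (normq_h L (p+1) \<xi>)^2)"
    using norm_le_normq[of \<xi>] h_pos p1 K0 by (intro mult_left_mono) auto
  also have "\<dots> \<le> C1i * (normq_h L (p + 1) \<xi>)^2"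
    unfolding C1i_def K_def using h_pos by (simp add: algebra_simps)
  finally show ?thesis by (simp add: s_def)
qed

end

context gsl begin

definition Pq :: "'m grid \<Rightarrow> real" where "Pq \<xi> = h * (\<Sum>j\<in>UNIV. \<bar>us $ j\<bar> powr (p - 1) * \<xi> $ j * \<xi> $ j)"

lemma Pq_eq: "inner_h L (\<chi> j. \<bar>us $ j\<bar> powr (p - 1) * \<xi> $ j) \<xi> = Pq \<xi>"
  by (simp add: inner_h_eq Pq_def inner_vec_def)

lemma T_bounds:
  fixes u :: "'m grid"
  assumes uS: "u \<in> S_h L p" and N: "norm (u - us) \<le> 1"
  shows "inner bv (u - us) \<le> 0" "- (KR R0 / 2 * (norm (u - us))^2) \<le> inner bv (u - us)"
proof -
  have "h * F u = 1" using uS normq_one by (simp add: S_h_def)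
  then have Fu: "F u = F us" using hF_us h_pos by (metis mult_left_cancel order_less_irrefl)
  show "inner bv (u - us) \<le> 0" using F_lower[of us u] Fu by (simp add: bv_def)
  have nus: "norm us \<le> R0" by (simp add: R0_def)
  have "norm u \<le> norm us + norm (u - us)" by (metis add.commute diff_add_cancel norm_triangle_ineq)
  then have nu: "norm u \<le> R0" using N norm_ge_zero[of us] unfolding R0_def by linarith
  show "- (KR R0 / 2 * (norm (u - us))^2) \<le> inner bv (u - us)"
    using F_upper[OF nus nu] Fu by (simp add: bv_def)
qed

lemma Qd_formula:
  fixes u :: "'m grid"
  shows "Q_h x0 L V \<omega> u - Q_h x0 L V \<omega> us = 2 * lams * (h / (p+1) * inner bv (u - us)) + Q_h x0 L V \<omega> (u - us)"
proof -
  have "Q_h x0 L V \<omega> (us + (u - us)) = Q_h x0 L V \<omega> us + 2 * inner_h L (A_h x0 L V \<omega> us) (u - us) + Q_h x0 L V \<omega> (u - us)"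
    by (rule Q_add)
  then show ?thesis by (simp add: A_us)
qed

lemma Qe_formula:
  fixes \<xi> :: "'m grid"
  assumes "inner bv \<xi> = 0"
  shows "Q_h x0 L V \<omega> (s *\<^sub>R us + \<xi>) = s^2 * lams + Q_h x0 L V \<omega> \<xi>"
proof -
  have "inner_h L (A_h x0 L V \<omega> (s *\<^sub>R us)) \<xi> = s * inner_h L (A_h x0 L V \<omega> us) \<xi>"
    by (simp add: A_scale inner_h_eq)
  also have "\<dots> = 0" using assms by (simp add: A_us)
  finally show ?thesis using Q_add[of "s *\<^sub>R us" \<xi>] Q_scale[of s us] Q_us by simp
qed

lemma sum_us_us: "(\<Sum>j\<in>UNIV. \<bar>us $ j\<bar> powr (p - 1) * us $ j * us $ j) = 1 / h"
proof -
  have "(\<Sum>j\<in>UNIV. \<bar>us $ j\<bar> powr (p - 1) * us $ j * us $ j) = (\<Sum>j\<in>UNIV. g1 p (us $ j) * us $ j) / (p+1)"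
    using p1 by (simp add: g1_def sum_divide_distrib mult_ac)
  also have "\<dots> = inner bv us / (p+1)" by (simp add: bv_def gv_def inner_vec_def mult_ac)
  also have "\<dots> = 1 / h" using inner_bv_us p1 by simp
  finally show ?thesis .
qed

lemma sum_us_xi: "inner bv \<xi> = 0 \<Longrightarrow> (\<Sum>j\<in>UNIV. \<bar>us $ j\<bar> powr (p - 1) * us $ j * \<xi> $ j) = 0"
proof -
  assume t: "inner bv \<xi> = 0"
  have "(\<Sum>j\<in>UNIV. \<bar>us $ j\<bar> powr (p - 1) * us $ j * \<xi> $ j) = inner bv \<xi> / (p+1)"
    using p1 by (simp add: bv_def gv_def inner_vec_def g1_def sum_divide_distrib mult_ac)
  then show ?thesis using t by simp
qed

lemma constraint:
  fixes u :: "'m grid"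
  assumes uS: "u \<in> S_h L p"
  defines "e \<equiv> u - us"
  defines "s \<equiv> h / (p+1) * inner bv e"
  defines "\<xi> \<equiv> e - s *\<^sub>R us"
  shows "inner bv \<xi> = 0"
    "\<exists>t. (\<forall>j. min (us$j) (u$j) \<le> t j \<and> t j \<le> max (us$j) (u$j)) \<and>
       s = - p / 2 * (s^2 + Pq \<xi>) - h / (p+1) * (\<Sum>j\<in>UNIV. (g2 p (t j) - g2 p (us $ j)) / 2 * (e $ j)^2)"
proof -
  show t: "inner bv \<xi> = 0"
    using inner_bv_us h_pos p1 by (simp add: \<xi>_def s_def inner_diff_right)
  have "h * F u = 1" using uS normq_one by (simp add: S_h_def)
  then have Fu: "F u = F us" using hF_us h_pos by (metis mult_left_cancel order_less_irrefl)
  obtain t where t1: "\<forall>j. min (us$j) (u$j) \<le> t j \<and> t j \<le> max (us$j) (u$j)"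
    and t2: "F u = F us + inner (gv us) (u - us) + (\<Sum>j\<in>UNIV. g2 p (t j) / 2 * (u$j - us$j)^2)"
    using F_taylor[of us u] by blast
  define Rm where "Rm = (\<Sum>j\<in>UNIV. (g2 p (t j) - g2 p (us $ j)) / 2 * (e $ j)^2)"
  have ibe: "inner bv e = - (\<Sum>j\<in>UNIV. g2 p (t j) / 2 * (e $ j)^2)"
    using t2 Fu by (simp add: bv_def e_def)
  have split: "(\<Sum>j\<in>UNIV. g2 p (t j) / 2 * (e $ j)^2) = (\<Sum>j\<in>UNIV. g2 p (us $ j) / 2 * (e $ j)^2) + Rm"
    by (simp add: Rm_def sum.distrib[symmetric] algebra_simps diff_divide_distrib)
  have ej: "e $ j = s * us $ j + \<xi> $ j" for j by (simp add: \<xi>_def)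
  have "(\<Sum>j\<in>UNIV. g2 p (us $ j) / 2 * (e $ j)^2) =
      (p+1) * p / 2 * (s^2 * (\<Sum>j\<in>UNIV. \<bar>us $ j\<bar> powr (p - 1) * us $ j * us $ j)
        + 2 * s * (\<Sum>j\<in>UNIV. \<bar>us $ j\<bar> powr (p - 1) * us $ j * \<xi> $ j)
        + (\<Sum>j\<in>UNIV. \<bar>us $ j\<bar> powr (p - 1) * \<xi> $ j * \<xi> $ j))"
  proof -
    have tm: "g2 p (us $ j) / 2 * (e $ j)^2 = (p+1) * p / 2 * (s^2 * (\<bar>us $ j\<bar> powr (p - 1) * us $ j * us $ j)
        + 2 * s * (\<bar>us $ j\<bar> powr (p - 1) * us $ j * \<xi> $ j) + \<bar>us $ j\<bar> powr (p - 1) * \<xi> $ j * \<xi> $ j)" for j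
      unfolding ej g2_def by (simp add: power2_eq_square field_simps)
    show ?thesis unfolding tm by (simp only: distrib_left sum.distrib sum_distrib_left)
  qed
  also have "\<dots> = (p+1) * p / 2 * (s^2 / h + Pq \<xi> / h)"
    using sum_us_us sum_us_xi[OF t] h_pos by (simp add: Pq_def)
  finally have main: "inner bv e = - ((p+1) * p / 2 * (s^2 / h + Pq \<xi> / h)) - Rm"
    using ibe split by simp
  have "s = h / (p+1) * inner bv e" by (simp add: s_def)
  also have "\<dots> = h / (p+1) * (- ((p+1) * p / 2 * (s^2 / h + Pq \<xi> / h)) - Rm)" by (simp only: main)
  also have "\<dots> = - p / 2 * (s^2 + Pq \<xi>) - h / (p+1) * Rm"
  proof -
    have pp: "p + 1 \<noteq> 0" "h \<noteq> 0" using h_pos p1 by auto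
    have "h / (p+1) * ((p+1) * p / 2 * (s^2 / h + Pq \<xi> / h)) = h / (p+1) * (p+1) * (p / 2 * (s^2 / h + Pq \<xi> / h))"
      by (simp add: mult_ac)
    also have "\<dots> = h * (p / 2 * (s^2 / h + Pq \<xi> / h))" using pp by simp
    also have "\<dots> = p / 2 * (s^2 + Pq \<xi>)" using pp by (simp add: field_simps)
    finally have "h / (p+1) * ((p+1) * p / 2 * (s^2 / h + Pq \<xi> / h)) = p / 2 * (s^2 + Pq \<xi>)" .
    then show ?thesis by (simp add: right_diff_distrib)
  qed
  finally have "s = - p / 2 * (s^2 + Pq \<xi>) - h / (p+1) * Rm" .
  then show "\<exists>t. (\<forall>j. min (us$j) (u$j) \<le> t j \<and> t j \<le> max (us$j) (u$j)) \<and>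
       s = - p / 2 * (s^2 + Pq \<xi>) - h / (p+1) * (\<Sum>j\<in>UNIV. (g2 p (t j) - g2 p (us $ j)) / 2 * (e $ j)^2)"
    using t1 unfolding Rm_def by blast
qed

end

context gsl begin

lemma part2_main:
  fixes u :: "'m grid"
  assumes c: "c > 0"
    and coer: "\<forall>\<xi>\<in>tangent_h L p us. 2 * (inner_h L (A_h x0 L V \<omega> \<xi>) \<xi> - p * lams * inner_h L (\<chi> j. \<bar>us $ j\<bar> powr (p - 1) * \<xi> $ j) \<xi>)
           \<ge> c * (norm1_h x0 L \<xi>)\<^sup>2"
    and \<eta>: "\<eta> > 0" "\<eta> \<le> c * (p+1) / (32 * (\<bar>lams\<bar> + 1))"
    and d\<eta>: "\<And>t t'. t \<in> {-R0..R0} \<Longrightarrow> t' \<in> {-R0..R0} \<Longrightarrow> \<bar>t' - t\<bar> < d \<Longrightarrow> \<bar>g2 p t' - g2 p t\<bar> < \<eta>"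
    and uS: "u \<in> S_h L p"
    and N1: "norm (u - us) \<le> 1"
    and N2: "norm (u - us) \<le> c * h / (32 * (\<bar>lams\<bar> + 1) * p * ((h * KR R0 / (2 * (p+1)))^2 + 1))"
    and N3: "norm (u - us) \<le> 1 / (2 * (h * KR R0 / (2 * (p+1)) * norm us + 1))"
    and N4: "norm (u - us) < d"
  shows "c * h / 16 * (norm (u - us))^2 \<le> Q_h x0 L V \<omega> u - Q_h x0 L V \<omega> us"
proof -
  define e where "e = u - us"
  define N where "N = norm e"
  define K where "K = KR R0"
  define a2 where "a2 = h * K / (2 * (p+1))"
  define La where "La = \<bar>lams\<bar> + 1"
  define s where "s = h / (p+1) * inner bv e"
  define \<xi> where "\<xi> = e - s *\<^sub>R us"
  have K0: "K \<ge> 0" using KR_nonneg by (simp add: K_def)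
  have a20: "a2 \<ge> 0" using h_pos p1 K0 by (simp add: a2_def)
  have La: "La \<ge> 1" "\<bar>lams\<bar> \<le> La" by (auto simp: La_def)
  have N0: "N \<ge> 0" by (simp add: N_def)
  have tb: "inner bv e \<le> 0" "- (K / 2 * N^2) \<le> inner bv e"
    using T_bounds[OF uS N1] by (auto simp: e_def N_def K_def)
  have sb: "\<bar>s\<bar> \<le> a2 * N^2"
  proof -
    have "\<bar>inner bv e\<bar> \<le> K / 2 * N^2" using tb by linarith
    then have "h / (p+1) * \<bar>inner bv e\<bar> \<le> h / (p+1) * (K / 2 * N^2)"
      using h_pos p1 by (intro mult_left_mono) auto
    then have "\<bar>s\<bar> \<le> h / (p+1) * (K / 2 * N^2)" using h_pos p1 by (simp add: s_def abs_mult)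
    moreover have "h / (p+1) * (K / 2 * N^2) = a2 * N^2"
    proof -
      have "p + 1 \<noteq> 0" using p1 by simp
      then show ?thesis by (simp add: a2_def field_simps)
    qed
    ultimately show ?thesis by simp
  qed
  have tx: "inner bv \<xi> = 0" and
    ex: "\<exists>t. (\<forall>j. min (us$j) (u$j) \<le> t j \<and> t j \<le> max (us$j) (u$j)) \<and>
       s = - p / 2 * (s^2 + Pq \<xi>) - h / (p+1) * (\<Sum>j\<in>UNIV. (g2 p (t j) - g2 p (us $ j)) / 2 * (e $ j)^2)"
    using constraint[OF uS] unfolding e_def s_def \<xi>_def by blast+
  obtain t where t1: "\<forall>j. min (us$j) (u$j) \<le> t j \<and> t j \<le> max (us$j) (u$j)"
    and t2: "s = - p / 2 * (s^2 + Pq \<xi>) - h / (p+1) * (\<Sum>j\<in>UNIV. (g2 p (t j) - g2 p (us $ j)) / 2 * (e $ j)^2)"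
    using ex by blast
  define Rm where "Rm = (\<Sum>j\<in>UNIV. (g2 p (t j) - g2 p (us $ j)) / 2 * (e $ j)^2)"
  have Rmb: "\<bar>Rm\<bar> \<le> \<eta> / 2 * N^2"
  proof -
    have "\<bar>Rm\<bar> \<le> (\<Sum>j\<in>UNIV. \<bar>(g2 p (t j) - g2 p (us $ j)) / 2 * (e $ j)^2\<bar>)"
      unfolding Rm_def by (rule sum_abs)
    also have "\<dots> \<le> (\<Sum>j\<in>UNIV. \<eta> / 2 * (e $ j * e $ j))"
    proof (rule sum_mono)
      fix j
      have nu: "norm u \<le> R0"
      proof -
        have "norm u \<le> norm us + norm (u - us)" by (metis add.commute diff_add_cancel norm_triangle_ineq)
        then show ?thesis using N1 norm_ge_zero[of us] unfolding R0_def by linarith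
      qed
      have uj: "\<bar>u $ j\<bar> \<le> R0" using nu component_le_norm_cart[of u j] by simp
      have usj: "\<bar>us $ j\<bar> \<le> R0" using component_le_norm_cart[of us j] norm_ge_zero[of us] by (simp add: R0_def)
      have tj: "min (us$j) (u$j) \<le> t j" "t j \<le> max (us$j) (u$j)" using t1 by auto
      have tR: "t j \<in> {-R0..R0}" using tj uj usj by (auto simp: min_def max_def split: if_splits)
      have usR: "us $ j \<in> {-R0..R0}" using usj by auto
      have "\<bar>t j - us $ j\<bar> \<le> \<bar>e $ j\<bar>" using tj by (auto simp: e_def min_def max_def split: if_splits)
      also have "\<bar>e $ j\<bar> \<le> N" using component_le_norm_cart[of e j] by (simp add: N_def)
      also have "N < d" using N4 by (simp add: N_def e_def)
      finally have "\<bar>g2 p (t j) - g2 p (us $ j)\<bar> < \<eta>" using d\<eta>[OF usR tR] by simp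
      then have "\<bar>(g2 p (t j) - g2 p (us $ j)) / 2\<bar> \<le> \<eta> / 2" by simp
      then have "\<bar>(g2 p (t j) - g2 p (us $ j)) / 2\<bar> * (e $ j)^2 \<le> \<eta> / 2 * (e $ j)^2"
        by (intro mult_right_mono) auto
      then show "\<bar>(g2 p (t j) - g2 p (us $ j)) / 2 * (e $ j)^2\<bar> \<le> \<eta> / 2 * (e $ j * e $ j)"
        by (simp add: abs_mult power2_eq_square)
    qed
    also have "\<dots> = \<eta> / 2 * N^2" by (simp add: N_def norm_sq_sum sum_distrib_left)
    finally show ?thesis .
  qed
  have e_dec: "e = s *\<^sub>R us + \<xi>" by (simp add: \<xi>_def)
  have Qd: "Q_h x0 L V \<omega> u - Q_h x0 L V \<omega> us = 2 * lams * s + s^2 * lams + Q_h x0 L V \<omega> \<xi>"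
    using Qd_formula[of u] Qe_formula[OF tx, of s] e_dec by (simp add: e_def s_def)
  have xT: "\<xi> \<in> tangent_h L p us" using tx tangent_iff by blast
  have co: "2 * (Q_h x0 L V \<omega> \<xi> - p * lams * Pq \<xi>) \<ge> c * (norm1_h x0 L \<xi>)^2"
    using coer xT by (simp add: Q_eq Pq_eq)
  have key: "Q_h x0 L V \<omega> u - Q_h x0 L V \<omega> us = (Q_h x0 L V \<omega> \<xi> - p * lams * Pq \<xi>) + lams * ((1 - p) * s^2 - 2 * h / (p+1) * Rm)"
  proof -
    have E2: "2 * s = - p * (s^2 + Pq \<xi>) - 2 * h / (p+1) * Rm" using t2 by (simp add: Rm_def algebra_simps)
    have A1: "Q_h x0 L V \<omega> u - Q_h x0 L V \<omega> us = Q_h x0 L V \<omega> \<xi> + lams * (2 * s + s^2)"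
      unfolding Qd by (simp add: algebra_simps)
    have "2 * s + s^2 = (- p * (s^2 + Pq \<xi>) - 2 * h / (p+1) * Rm) + s^2" by (simp only: E2)
    also have "\<dots> = (1 - p) * s^2 - p * Pq \<xi> - 2 * h / (p+1) * Rm" by (simp add: algebra_simps)
    finally have A2: "2 * s + s^2 = (1 - p) * s^2 - p * Pq \<xi> - 2 * h / (p+1) * Rm" .
    show ?thesis unfolding A1 A2 by (simp add: algebra_simps)
  qed
  have nxi: "N / 2 \<le> norm \<xi>"
  proof -
    have "N \<le> norm \<xi> + \<bar>s\<bar> * norm us"
      using e_dec norm_triangle_ineq[of "s *\<^sub>R us" \<xi>] by (simp add: N_def add.commute)
    moreover have "\<bar>s\<bar> * norm us \<le> N / 2"
    proof -
      have "\<bar>s\<bar> * norm us \<le> a2 * N^2 * norm us" using sb by (intro mult_right_mono) auto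
      also have "\<dots> = N * (a2 * N * norm us)" by (simp add: power2_eq_square mult_ac)
      also have "\<dots> \<le> N * (1/2)"
      proof (rule mult_left_mono[OF _ N0])
        have D: "2 * (a2 * norm us + 1) > 0" using a20 by (simp add: add_nonneg_pos)
        have "N \<le> 1 / (2 * (a2 * norm us + 1))" using N3 by (simp add: N_def e_def a2_def K_def)
        then have "N * (2 * (a2 * norm us + 1)) \<le> 1" using D by (simp add: le_divide_eq)
        moreover have "N * (2 * (a2 * norm us + 1)) = 2 * (a2 * N * norm us) + 2 * N" by (simp add: algebra_simps)
        ultimately have "2 * (a2 * N * norm us) \<le> 1" using N0 by linarith
        then show "a2 * N * norm us \<le> 1/2" by simp
      qed
      finally show ?thesis by simp
    qed
    ultimately show ?thesis by linarith
  qed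
  have n1xi: "c / 2 * (norm1_h x0 L \<xi>)^2 \<ge> c * h / 8 * N^2"
  proof -
    have "h * (N/2)^2 \<le> h * (norm \<xi>)^2" using nxi N0 h_pos by (intro mult_left_mono power_mono) auto
    also have "\<dots> \<le> (norm1_h x0 L \<xi>)^2" by (rule norm1_lower)
    finally have "h * N^2 / 4 \<le> (norm1_h x0 L \<xi>)^2" by (simp add: power_divide)
    then have "c / 2 * (h * N^2 / 4) \<le> c / 2 * (norm1_h x0 L \<xi>)^2" using c by (intro mult_left_mono) auto
    then show ?thesis by (simp add: field_simps)
  qed
  have err1: "\<bar>lams\<bar> * ((p - 1) * s^2) \<le> c * h / 32 * N^2"
  proof -
    have "s^2 \<le> (a2 * N^2)^2" using sb by (metis abs_ge_zero power2_abs power_mono)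
    also have "\<dots> = a2^2 * N^2 * N^2" by (simp add: power2_eq_square)
    also have "\<dots> \<le> (a2^2 + 1) * N * N^2"
    proof -
      have "N^2 \<le> N" using N0 N1 by (simp add: N_def e_def power2_eq_square mult_left_le)
      then have "a2^2 * N^2 \<le> (a2^2 + 1) * N" using N0 by (intro mult_mono) auto
      then show ?thesis by (intro mult_right_mono) auto
    qed
    finally have s2: "s^2 \<le> (a2^2 + 1) * N * N^2" .
    have "\<bar>lams\<bar> * ((p - 1) * s^2) \<le> La * (p * ((a2^2 + 1) * N * N^2))"
      using La s2 p1 by (intro mult_mono) (auto intro!: mult_mono)
    also have "\<dots> = (La * p * (a2^2 + 1) * N) * N^2" by (simp add: mult_ac)
    also have "\<dots> \<le> (c * h / 32) * N^2"
    proof (rule mult_right_mono)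
      have "a2^2 + 1 > 0" by (simp add: add_nonneg_pos)
      then have pos: "32 * La * p * (a2^2 + 1) > 0" using La p1 by simp
      have "N \<le> c * h / (32 * La * p * (a2^2 + 1))"
        using N2 by (simp add: N_def e_def La_def a2_def K_def)
      then have "N * (32 * La * p * (a2^2 + 1)) \<le> c * h" using pos by (simp add: pos_le_divide_eq)
      then show "La * p * (a2^2 + 1) * N \<le> c * h / 32" by (simp add: field_simps)
    qed auto
    finally show ?thesis .
  qed
  have err2: "\<bar>lams\<bar> * (2 * h / (p+1) * \<bar>Rm\<bar>) \<le> c * h / 32 * N^2"
  proof -
    have "\<bar>lams\<bar> * (2 * h / (p+1) * \<bar>Rm\<bar>) \<le> La * (2 * h / (p+1) * (\<eta> / 2 * N^2))"
      using La Rmb h_pos p1 by (intro mult_mono mult_left_mono) auto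
    also have "\<dots> = (La * \<eta>) * (h / (p+1)) * N^2" by (simp add: field_simps)
    also have "\<dots> \<le> (c * (p+1) / 32) * (h / (p+1)) * N^2"
    proof -
      have "La * \<eta> \<le> c * (p+1) / 32"
        using \<eta>(2) La by (simp add: La_def field_simps)
      then show ?thesis using h_pos p1 by (intro mult_right_mono) auto
    qed
    also have "\<dots> = c * h / 32 * N^2" using p1 by (simp add: field_simps)
    finally show ?thesis .
  qed
  have "\<bar>lams * ((1 - p) * s^2 - 2 * h / (p+1) * Rm)\<bar> \<le> \<bar>lams\<bar> * ((p - 1) * s^2) + \<bar>lams\<bar> * (2 * h / (p+1) * \<bar>Rm\<bar>)"
  proof -
    have "\<bar>(1 - p) * s^2 - 2 * h / (p+1) * Rm\<bar> \<le> \<bar>(1 - p) * s^2\<bar> + \<bar>2 * h / (p+1) * Rm\<bar>"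
      by (rule abs_triangle_ineq4)
    moreover have "\<bar>(1 - p) * s^2\<bar> = (p - 1) * s^2" using p1 by (simp add: abs_mult)
    moreover have "\<bar>2 * h / (p+1) * Rm\<bar> = 2 * h / (p+1) * \<bar>Rm\<bar>" using p1 h_pos by (simp add: abs_mult)
    ultimately have Y: "\<bar>(1 - p) * s^2 - 2 * h / (p+1) * Rm\<bar> \<le> (p - 1) * s^2 + 2 * h / (p+1) * \<bar>Rm\<bar>" by simp
    have "\<bar>lams * ((1 - p) * s^2 - 2 * h / (p+1) * Rm)\<bar> = \<bar>lams\<bar> * \<bar>(1 - p) * s^2 - 2 * h / (p+1) * Rm\<bar>"
      by (rule abs_mult)
    also have "\<dots> \<le> \<bar>lams\<bar> * ((p - 1) * s^2 + 2 * h / (p+1) * \<bar>Rm\<bar>)"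
      using Y by (intro mult_left_mono) auto
    finally show ?thesis by (simp add: distrib_left)
  qed
  moreover have "- \<bar>lams * ((1 - p) * s^2 - 2 * h / (p+1) * Rm)\<bar> \<le> lams * ((1 - p) * s^2 - 2 * h / (p+1) * Rm)"
    using abs_ge_minus_self[of "lams * ((1 - p) * s^2 - 2 * h / (p+1) * Rm)"] by linarith
  moreover have "c * h / 16 * N^2 = c * h / 32 * N^2 + c * h / 32 * N^2" by simp
  moreover have lin3: "\<And>Y A B D E AY::real. AY \<le> A + B \<Longrightarrow> - AY \<le> Y \<Longrightarrow> E = D + D \<Longrightarrow> A \<le> D \<Longrightarrow> B \<le> D \<Longrightarrow> - E \<le> Y"
    by linarith
  ultimately have ER: "lams * ((1 - p) * s^2 - 2 * h / (p+1) * Rm) \<ge> - (c * h / 16 * N^2)"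
    using err1 err2 by blast
  have n1: "c * h / 8 * N^2 \<le> (c * (norm1_h x0 L \<xi>)^2) / 2" using n1xi by simp
  have lin2: "\<And>a q r::real. a \<le> 2 * q \<Longrightarrow> r \<le> a / 2 \<Longrightarrow> r \<le> q" by linarith
  have "Q_h x0 L V \<omega> \<xi> - p * lams * Pq \<xi> \<ge> c * h / 8 * N^2" by (rule lin2[OF co n1])
  then have "Q_h x0 L V \<omega> u - Q_h x0 L V \<omega> us \<ge> c * h / 8 * N^2 - c * h / 16 * N^2"
    using key ER by linarith
  moreover have "c * h / 8 * N^2 - c * h / 16 * N^2 = c * h / 16 * N^2" by simp
  ultimately show ?thesis by (simp add: N_def e_def)
qed

end

context gsl begin

lemma part2_upper:
  fixes u :: "'m grid"
  assumes uS: "u \<in> S_h L p" and N1: "norm (u - us) \<le> 1"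
  shows "Q_h x0 L V \<omega> u - Q_h x0 L V \<omega> us \<le> (2 * \<bar>lams\<bar> * (h * KR R0 / (2 * (p+1))) + CQ) * (norm (u - us))^2"
proof -
  define e where "e = u - us"
  define N where "N = norm e"
  define a2 where "a2 = h * KR R0 / (2 * (p+1))"
  define s where "s = h / (p+1) * inner bv e"
  have tb: "inner bv e \<le> 0" "- (KR R0 / 2 * N^2) \<le> inner bv e"
    using T_bounds[OF uS N1] by (auto simp: e_def N_def)
  have sb: "\<bar>s\<bar> \<le> a2 * N^2"
  proof -
    have "\<bar>inner bv e\<bar> \<le> KR R0 / 2 * N^2" using tb by linarith
    then have "h / (p+1) * \<bar>inner bv e\<bar> \<le> h / (p+1) * (KR R0 / 2 * N^2)"
      using h_pos p1 by (intro mult_left_mono) auto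
    then have "\<bar>s\<bar> \<le> h / (p+1) * (KR R0 / 2 * N^2)" using h_pos p1 by (simp add: s_def abs_mult)
    moreover have "h / (p+1) * (KR R0 / 2 * N^2) = a2 * N^2"
    proof -
      have "p + 1 \<noteq> 0" using p1 by simp
      then show ?thesis by (simp add: a2_def field_simps)
    qed
    ultimately show ?thesis by simp
  qed
  have Qd: "Q_h x0 L V \<omega> u - Q_h x0 L V \<omega> us = 2 * lams * s + Q_h x0 L V \<omega> e"
    using Qd_formula[of u] by (simp add: e_def s_def)
  have "2 * lams * s \<le> 2 * \<bar>lams\<bar> * (a2 * N^2)"
  proof -
    have "2 * lams * s \<le> 2 * \<bar>lams\<bar> * \<bar>s\<bar>" by (simp add: abs_mult[symmetric] mult.assoc)
    also have "\<dots> \<le> 2 * \<bar>lams\<bar> * (a2 * N^2)" using sb by (intro mult_left_mono) auto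
    finally show ?thesis .
  qed
  moreover have "Q_h x0 L V \<omega> e \<le> CQ * N^2" using Q_bound[of e] by (simp add: N_def)
  ultimately have "Q_h x0 L V \<omega> u - Q_h x0 L V \<omega> us \<le> 2 * \<bar>lams\<bar> * (a2 * N^2) + CQ * N^2"
    using Qd by linarith
  then show ?thesis by (simp add: a2_def N_def e_def algebra_simps)
qed

lemma part2:
  assumes c: "c > 0"
    and coer: "\<forall>\<xi>\<in>tangent_h L p us. 2 * (inner_h L (A_h x0 L V \<omega> \<xi>) \<xi> - p * lams * inner_h L (\<chi> j. \<bar>us $ j\<bar> powr (p - 1) * \<xi> $ j) \<xi>)
           \<ge> c * (norm1_h x0 L \<xi>)\<^sup>2"
  shows "\<exists>\<delta>0>0. \<forall>\<delta>. 0 < \<delta> \<and> \<delta> \<le> \<delta>0 \<longrightarrow>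
        (\<exists>C1>0. \<exists>C2>0. \<forall>u\<in>U_h x0 L \<delta> us \<inter> S_h L p.
            C1 * (norm1_h x0 L (u - us))\<^sup>2 \<le> Q_h x0 L V \<omega> u - Q_h x0 L V \<omega> us \<and>
            Q_h x0 L V \<omega> u - Q_h x0 L V \<omega> us \<le> C2 * (norm1_h x0 L (u - us))\<^sup>2) \<and>
        (\<forall>u\<in>U_h x0 L \<delta> us \<inter> S_h L p. u \<noteq> us \<longrightarrow> Q_h x0 L V \<omega> us < Q_h x0 L V \<omega> u)"
proof -
  define a2 where "a2 = h * KR R0 / (2 * (p+1))"
  define \<eta> where "\<eta> = c * (p+1) / (32 * (\<bar>lams\<bar> + 1))"
  have \<eta>: "\<eta> > 0" using c p1 by (simp add: \<eta>_def add_pos_nonneg)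
  have uc: "uniformly_continuous_on {-R0..R0} (g2 p)"
    by (rule compact_uniformly_continuous[OF g2_cont[OF p1] compact_Icc])
  obtain d where d: "d > 0" "\<And>t t'. t \<in> {-R0..R0} \<Longrightarrow> t' \<in> {-R0..R0} \<Longrightarrow> dist t' t < d \<Longrightarrow> dist (g2 p t') (g2 p t) < \<eta>"
    using uc[unfolded uniformly_continuous_on_def] \<eta> by metis
  define M2 where "M2 = c * h / (32 * (\<bar>lams\<bar> + 1) * p * (a2^2 + 1))"
  define M3 where "M3 = 1 / (2 * (a2 * norm us + 1))"
  define Nm where "Nm = min 1 (min M2 (min M3 (d/2)))"
  have a20: "a2 \<ge> 0" using h_pos p1 KR_nonneg by (simp add: a2_def)
  have M2: "M2 > 0"
  proof -
    have "a2^2 + 1 > 0" by (simp add: add_nonneg_pos)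
    then show ?thesis using c h_pos p1 by (simp add: M2_def add_pos_nonneg)
  qed
  have M3: "M3 > 0" using a20 by (simp add: M3_def add_nonneg_pos)
  have Nm: "Nm > 0" using M2 M3 d by (simp add: Nm_def)
  define \<delta>0 where "\<delta>0 = sqrt h * Nm"
  have \<delta>0: "\<delta>0 > 0" using Nm h_pos by (simp add: \<delta>0_def)
  define C1 where "C1 = c * h / (16 * CN)"
  define C2 where "C2 = (2 * \<bar>lams\<bar> * a2 + CQ) / h + 1"
  have C1: "C1 > 0" using c h_pos CN_pos by (simp add: C1_def)
  have C2: "C2 > 0"
  proof -
    have "(2 * \<bar>lams\<bar> * a2 + CQ) / h \<ge> 0" using a20 CQ_nonneg h_pos by simp
    then show ?thesis by (simp add: C2_def)
  qed
  have bounds: "C1 * (norm1_h x0 L (u - us))\<^sup>2 \<le> Q_h x0 L V \<omega> u - Q_h x0 L V \<omega> us \<and>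
            Q_h x0 L V \<omega> u - Q_h x0 L V \<omega> us \<le> C2 * (norm1_h x0 L (u - us))\<^sup>2"
    if uS: "u \<in> S_h L p" and uU: "norm1_h x0 L (u - us) \<le> \<delta>0" for u :: "'m grid"
  proof -
    have N: "norm (u - us) \<le> Nm"
      using N_bound[OF uU] h_pos by (simp add: \<delta>0_def)
    have N1: "norm (u - us) \<le> 1" using N by (simp add: Nm_def)
    have N2: "norm (u - us) \<le> M2" using N by (simp add: Nm_def)
    have N3: "norm (u - us) \<le> M3" using N by (simp add: Nm_def)
    have N4: "norm (u - us) < d" using N d by (simp add: Nm_def)
    have low: "c * h / 16 * (norm (u - us))^2 \<le> Q_h x0 L V \<omega> u - Q_h x0 L V \<omega> us"
    proof (rule part2_main[OF c coer \<eta> _ _ uS N1])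
      show "\<eta> \<le> c * (p+1) / (32 * (\<bar>lams\<bar> + 1))" by (simp add: \<eta>_def)
      show "\<bar>g2 p t' - g2 p t\<bar> < \<eta>" if "t \<in> {-R0..R0}" "t' \<in> {-R0..R0}" "\<bar>t' - t\<bar> < d" for t t'
        using d(2)[OF that(1,2)] that(3) by (simp add: dist_real_def)
      show "norm (u - us) \<le> c * h / (32 * (\<bar>lams\<bar> + 1) * p * ((h * KR R0 / (2 * (p+1)))^2 + 1))"
        using N2 by (simp add: M2_def a2_def)
      show "norm (u - us) \<le> 1 / (2 * (h * KR R0 / (2 * (p+1)) * norm us + 1))"
        using N3 by (simp add: M3_def a2_def)
      show "norm (u - us) < d" by (rule N4)
    qed
    have "C1 * (norm1_h x0 L (u - us))\<^sup>2 \<le> C1 * (CN * (norm (u - us))^2)"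
      using norm1_upper[of "u - us"] C1 by (intro mult_left_mono) auto
    also have "\<dots> = c * h / 16 * (norm (u - us))^2" using CN_pos by (simp add: C1_def)
    finally have L: "C1 * (norm1_h x0 L (u - us))\<^sup>2 \<le> Q_h x0 L V \<omega> u - Q_h x0 L V \<omega> us" using low by linarith
    have "Q_h x0 L V \<omega> u - Q_h x0 L V \<omega> us \<le> (2 * \<bar>lams\<bar> * a2 + CQ) * (norm (u - us))^2"
      using part2_upper[OF uS N1] by (simp add: a2_def)
    also have "\<dots> = ((2 * \<bar>lams\<bar> * a2 + CQ) / h) * (h * (norm (u - us))^2)" using h_pos by simp
    also have "\<dots> \<le> ((2 * \<bar>lams\<bar> * a2 + CQ) / h) * (norm1_h x0 L (u - us))^2"
      using norm1_lower[of "u - us"] a20 CQ_nonneg h_pos by (intro mult_left_mono) auto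
    also have "\<dots> \<le> C2 * (norm1_h x0 L (u - us))^2" by (intro mult_right_mono) (auto simp: C2_def)
    finally show ?thesis using L by simp
  qed
  show ?thesis
  proof (rule exI[of _ \<delta>0], rule conjI[OF \<delta>0], intro allI impI conjI)
    fix \<delta> assume \<delta>: "0 < \<delta> \<and> \<delta> \<le> \<delta>0"
    have sub: "\<And>u. u \<in> U_h x0 L \<delta> us \<inter> S_h L p \<Longrightarrow> u \<in> S_h L p \<and> norm1_h x0 L (u - us) \<le> \<delta>0"
      using \<delta> by (auto simp: U_h_def)
    show "\<exists>C1>0. \<exists>C2>0. \<forall>u\<in>U_h x0 L \<delta> us \<inter> S_h L p.
            C1 * (norm1_h x0 L (u - us))\<^sup>2 \<le> Q_h x0 L V \<omega> u - Q_h x0 L V \<omega> us \<and>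
            Q_h x0 L V \<omega> u - Q_h x0 L V \<omega> us \<le> C2 * (norm1_h x0 L (u - us))\<^sup>2"
      using bounds sub C1 C2 by blast
    show "\<forall>u\<in>U_h x0 L \<delta> us \<inter> S_h L p. u \<noteq> us \<longrightarrow> Q_h x0 L V \<omega> us < Q_h x0 L V \<omega> u"
    proof (intro ballI impI)
      fix u assume u: "u \<in> U_h x0 L \<delta> us \<inter> S_h L p" "u \<noteq> us"
      have "norm (u - us) > 0" using u(2) by simp
      then have "h * (norm (u - us))^2 > 0" using h_pos by simp
      then have "(norm1_h x0 L (u - us))^2 > 0" using norm1_lower[of "u - us"] by linarith
      then have "C1 * (norm1_h x0 L (u - us))^2 > 0" using C1 by simp
      then show "Q_h x0 L V \<omega> us < Q_h x0 L V \<omega> u" using bounds sub[OF u(1)] by fastforce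
    qed
  qed
qed

lemma part1:
  "\<exists>\<delta>>0. \<exists>W \<epsilon> C. \<exists>r :: 'm grid \<Rightarrow> real.
        open W \<and> 0 \<in> W \<and> \<epsilon> > 0 \<and> C2_on W r \<and> r 0 = 0 \<and>
        (\<forall>\<xi>\<in>tangent_h L p us \<inter> W. \<bar>r \<xi>\<bar> < \<epsilon> \<and>
            (\<forall>s. \<bar>s\<bar> < \<epsilon> \<longrightarrow>
               (normq_h L (p + 1) ((1 + s) *\<^sub>R us + \<xi>) = 1 \<longleftrightarrow> s = r \<xi>))) \<and>
        (\<forall>u \<in> U_h x0 L \<delta> us. \<forall>s. \<forall>\<xi>\<in>tangent_h L p us.
            u = (1 + s) *\<^sub>R us + \<xi> \<longrightarrow> \<xi> \<in> W \<and> \<bar>s\<bar> < \<epsilon>) \<and>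
        (\<forall>\<xi>\<in>tangent_h L p us \<inter> W. \<bar>r \<xi>\<bar> \<le> C * (normq_h L (p + 1) \<xi>)\<^sup>2) \<and>
        (\<forall>\<xi>\<in>tangent_h L p us. (normq_h L (p + 1) \<xi>)\<^sup>2 \<le> C * (norm1_h x0 L \<xi>)\<^sup>2)"
proof (rule exI[of _ delta1], rule conjI[OF delta1_pos], rule exI[of _ W], rule exI[of _ eps], rule exI[of _ C1i],
    rule exI[of _ rr], intro conjI W_open W_0 eps_pos C2_rr rr_0 ballI allI impI)
  fix \<xi> assume "\<xi> \<in> tangent_h L p us \<inter> W"
  then have x: "\<xi> \<in> W" "\<xi> \<in> tangent_h L p us" by auto
  show "\<bar>rr \<xi>\<bar> < eps" using rr_prop(1)[OF x(1)] .
  show "\<bar>rr \<xi>\<bar> \<le> C1i * (normq_h L (p + 1) \<xi>)\<^sup>2" by (rule r_quad[OF x])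
next
  fix \<xi> s assume "\<xi> \<in> tangent_h L p us \<inter> W" "\<bar>s\<bar> < eps"
  then show "normq_h L (p + 1) ((1 + s) *\<^sub>R us + \<xi>) = 1 \<longleftrightarrow> s = rr \<xi>" using root_clause by blast
next
  fix u s \<xi> assume "u \<in> U_h x0 L delta1 us" "\<xi> \<in> tangent_h L p us" "u = (1 + s) *\<^sub>R us + \<xi>"
  then show "\<xi> \<in> W" "\<bar>s\<bar> < eps" using U_clause by blast+
next
  fix \<xi> :: "'m grid" show "(normq_h L (p + 1) \<xi>)\<^sup>2 \<le> C1i * (norm1_h x0 L \<xi>)\<^sup>2" by (rule normq_norm1)
qed

end

theorem mainTheorem16:
  fixes x0 L p \<omega> lams :: real and V :: "real \<Rightarrow> real" and us :: "'m::finite grid"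
  assumes L_pos: "L > 0"
    and A1_p: "1 < p"
    and A1_V: "\<forall>x. V x \<ge> 0" "bounded (range V)"
    and gs: "is_ground_state x0 L V \<omega> p us"
    and mult: "\<forall>j. A_h x0 L V \<omega> us $ j = lams * (\<bar>us $ j\<bar> powr (p - 1) * us $ j)"
  shows
   "(\<exists>\<delta>>0. \<exists>W \<epsilon> C. \<exists>r :: 'm grid \<Rightarrow> real.
        open W \<and> 0 \<in> W \<and> \<epsilon> > 0 \<and> C2_on W r \<and> r 0 = 0 \<and>
        (\<forall>\<xi>\<in>tangent_h L p us \<inter> W. \<bar>r \<xi>\<bar> < \<epsilon> \<and>
            (\<forall>s. \<bar>s\<bar> < \<epsilon> \<longrightarrow>
               (normq_h L (p + 1) ((1 + s) *\<^sub>R us + \<xi>) = 1 \<longleftrightarrow> s = r \<xi>))) \<and>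
        (\<forall>u \<in> U_h x0 L \<delta> us. \<forall>s. \<forall>\<xi>\<in>tangent_h L p us.
            u = (1 + s) *\<^sub>R us + \<xi> \<longrightarrow> \<xi> \<in> W \<and> \<bar>s\<bar> < \<epsilon>) \<and>
        (\<forall>\<xi>\<in>tangent_h L p us \<inter> W. \<bar>r \<xi>\<bar> \<le> C * (normq_h L (p + 1) \<xi>)\<^sup>2) \<and>
        (\<forall>\<xi>\<in>tangent_h L p us. (normq_h L (p + 1) \<xi>)\<^sup>2 \<le> C * (norm1_h x0 L \<xi>)\<^sup>2))
    \<and>
    ((\<omega> > - lambda0' x0 L V TYPE('m) \<and>
      (\<exists>c>0. \<forall>\<xi>\<in>tangent_h L p us.
         2 * (inner_h L (A_h x0 L V \<omega> \<xi>) \<xi> - p * lams * inner_h L (\<chi> j. \<bar>us $ j\<bar> powr (p - 1) * \<xi> $ j) \<xi>)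
           \<ge> c * (norm1_h x0 L \<xi>)\<^sup>2))
     \<longrightarrow>
     (\<exists>\<delta>0>0. \<forall>\<delta>. 0 < \<delta> \<and> \<delta> \<le> \<delta>0 \<longrightarrow>
        (\<exists>C1>0. \<exists>C2>0. \<forall>u\<in>U_h x0 L \<delta> us \<inter> S_h L p.
            C1 * (norm1_h x0 L (u - us))\<^sup>2 \<le> Q_h x0 L V \<omega> u - Q_h x0 L V \<omega> us \<and>
            Q_h x0 L V \<omega> u - Q_h x0 L V \<omega> us \<le> C2 * (norm1_h x0 L (u - us))\<^sup>2) \<and>
        (\<forall>u\<in>U_h x0 L \<delta> us \<inter> S_h L p. u \<noteq> us \<longrightarrow> Q_h x0 L V \<omega> us < Q_h x0 L V \<omega> u)))"
proof -
  have usS: "normq_h L (p + 1) us = 1" using gs by (simp add: is_ground_state_def S_h_def)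
  interpret G: gsl x0 L V \<omega> p lams us
    by unfold_locales (use L_pos A1_p usS mult in auto)
  show ?thesis
    apply (intro conjI impI)
     apply (rule G.part1)
    apply (elim conjE exE)
    apply (rule G.part2)
     apply assumption+
    done
qed

end
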